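(* Let $m,n,c$ be positive integers such that $c\equiv0\pmod4$, $m\equiv n\equiv1\pmod4$, and $m,n\geqslant9$. Then there exists an $\mathrm{IHS}(m,n;c)$.
   Context: An integer Heffter array set $\mathrm{IHS}(m,n;c)$ is a collection of $c$ completely filled $m\times n$ arrays with integer entries such that the absolute values of all $mnc$ entries (taken over all $c$ arrays) are exactly $1,2,\ldots,mnc$, each occurring exactly once, and in every array the entries of each row and of each column sum to $0$. *)

theory Defs
  imports Main
begin

definition IHS :: "nat \<Rightarrow> nat \<Rightarrow> nat \<Rightarrow> (nat \<Rightarrow> nat \<Rightarrow> nat \<Rightarrow> int) \<Rightarrow> bool" where
  "IHS m n c A \<longleftrightarrow>
     bij_betw (\<lambda>(k, i, j). \<bar>A k i j\<bar>) ({..<c} \<times> {..<m} \<times> {..<n}) {1..int (m * n * c)}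
   \<and> (\<forall>k<c. \<forall>i<m. (\<Sum>j<n. A k i j) = 0)
   \<and> (\<forall>k<c. \<forall>j<n. (\<Sum>i<m. A k i j) = 0)"

end

theory Submission
  imports Defs
begin

type_synonym cell = "nat \<times> nat \<times> int \<times> int"

definition net :: "cell list \<Rightarrow> nat \<Rightarrow> nat \<Rightarrow> int" where
  "net L tg x = sum_list (map (\<lambda>(t,i,s,v). if t = tg \<and> i = x then s else 0) L)"

definition line_ok :: "nat \<Rightarrow> cell list \<Rightarrow> bool" where
  "line_ok k L \<longleftrightarrow> sum_list (map (\<lambda>(t,i,s,v). s * v) L) = 5 * sum_list (map (\<lambda>u. net L 0 (3*u)) [0..<k])
     \<and> list_all (\<lambda>u. net L 0 (3*u+1) = net L 0 (3*u) \<and> net L 0 (3*u+2) = - net L 0 (3*u)) [0..<k]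
     \<and> list_all (\<lambda>(t,i,s,v). (t = 0 \<and> i < 3*k) \<or> (t = 1 \<and> net L 1 i = 0)) L"

definition cv :: "(nat \<Rightarrow> int) \<Rightarrow> (nat \<Rightarrow> int) \<Rightarrow> cell \<Rightarrow> int" where
  "cv BT BR c = (case c of (t,i,s,v) \<Rightarrow> s * ((if t = 0 then BT i else BR i) + v))"

lemma net_Nil[simp]: "net [] tg x = 0" by (simp add: net_def)
lemma net_Cons[simp]: "net ((t,i,s,v) # L) tg x = (if t = tg \<and> i = x then s else 0) + net L tg x"
  by (simp add: net_def)

lemma triple_part:
  assumes "\<forall>c\<in>set L. fst c = 0 \<longrightarrow> fst (snd c) < K"
  shows "sum_list (map (\<lambda>(t,i,s,v). if t = 0 then s * BT i else 0) L) = (\<Sum>x<K. BT x * net L 0 x)"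
  using assms
proof (induction L)
  case Nil then show ?case by simp
next
  case (Cons c L)
  obtain t i s v where c: "c = (t,i,s,v)" by (cases c) auto
  have IH: "sum_list (map (\<lambda>(t,i,s,v). if t = 0 then s * BT i else 0) L) = (\<Sum>x<K. BT x * net L 0 x)"
    using Cons by auto
  have "(\<Sum>x<K. BT x * net (c#L) 0 x) = (\<Sum>x<K. BT x * (if t = 0 \<and> i = x then s else 0)) + (\<Sum>x<K. BT x * net L 0 x)"
    by (simp add: c distrib_left sum.distrib)
  also have "(\<Sum>x<K. BT x * (if t = 0 \<and> i = x then s else 0)) = (if t = 0 then s * BT i else 0)"
  proof (cases "t = 0")
    case True
    then have "i < K" using Cons.prems c by auto
    then show ?thesis using True by (simp add: if_distrib[where f="\<lambda>z. BT _ * z"] sum.delta' mult.commute cong: if_cong)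
  next
    case False then show ?thesis by simp
  qed
  finally show ?case using IH c by simp
qed

lemma rect_part:
  assumes "finite S" "\<forall>c\<in>set L. fst c \<noteq> 0 \<longrightarrow> fst c = 1 \<and> fst (snd c) \<in> S"
  shows "sum_list (map (\<lambda>(t,i,s,v). if t = 0 then 0 else s * BR i) L) = (\<Sum>x\<in>S. BR x * net L 1 x)"
  using assms(2)
proof (induction L)
  case Nil then show ?case by simp
next
  case (Cons c L)
  obtain t i s v where c: "c = (t,i,s,v)" by (cases c) auto
  have IH: "sum_list (map (\<lambda>(t,i,s,v). if t = 0 then 0 else s * BR i) L) = (\<Sum>x\<in>S. BR x * net L 1 x)"
    using Cons by auto
  have "(\<Sum>x\<in>S. BR x * net (c#L) 1 x) = (\<Sum>x\<in>S. BR x * (if t = 1 \<and> i = x then s else 0)) + (\<Sum>x\<in>S. BR x * net L 1 x)"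
    by (simp add: c distrib_left sum.distrib)
  also have "(\<Sum>x\<in>S. BR x * (if t = 1 \<and> i = x then s else 0)) = (if t = 0 then 0 else s * BR i)"
  proof (cases "t = 0")
    case True
    then show ?thesis by simp
  next
    case False
    then have "t = 1" "i \<in> S" using Cons.prems c by auto
    then show ?thesis using False assms(1) by (simp add: if_distrib[where f="\<lambda>z. BR _ * z"] sum.delta' mult.commute cong: if_cong)
  qed
  finally show ?case using IH c by simp
qed

lemma sum_3k: "(\<Sum>x<3*k. f x) = (\<Sum>u<k. f (3*u) + f (3*u+1) + f (3*u+2))" for f :: "nat \<Rightarrow> int"
proof (induction k)
  case 0 then show ?case by simp
next
  case (Suc k)
  have e: "3 * Suc k = Suc (Suc (Suc (3*k)))" by simp
  show ?case unfolding e sum.lessThan_Suc using Suc.IH by (simp add: add.assoc)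
qed

lemma line_sum_zero:
  assumes ok: "line_ok k L"
    and rel: "\<And>u. BT (3*u+2) = BT (3*u) + BT (3*u+1) + 5"
  shows "sum_list (map (cv BT BR) L) = 0"
proof -
  have ok1: "sum_list (map (\<lambda>(t,i,s,v). s * v) L) = 5 * (\<Sum>u<k. net L 0 (3*u))"
    using ok by (simp add: line_ok_def interv_sum_list_conv_sum_set_nat atLeast0LessThan)
  have ok2: "\<And>u. u < k \<Longrightarrow> net L 0 (3*u+1) = net L 0 (3*u) \<and> net L 0 (3*u+2) = - net L 0 (3*u)"
    using ok by (auto simp: line_ok_def list_all_iff)
  have ok3: "\<forall>c\<in>set L. (fst c = 0 \<and> fst (snd c) < 3*k) \<or> (fst c = 1 \<and> net L 1 (fst (snd c)) = 0)"
    using ok by (auto simp: line_ok_def list_all_iff)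
  have split: "\<And>c. cv BT BR c = (case c of (t,i,s,v) \<Rightarrow> s * v) + (case c of (t,i,s,v) \<Rightarrow> if t = 0 then s * BT i else 0)
                 + (case c of (t,i,s,v) \<Rightarrow> if t = 0 then 0 else s * BR i)"
    by (auto simp: cv_def algebra_simps)
  have "sum_list (map (cv BT BR) L) = sum_list (map (\<lambda>(t,i,s,v). s * v) L)
      + sum_list (map (\<lambda>(t,i,s,v). if t = 0 then s * BT i else 0) L)
      + sum_list (map (\<lambda>(t,i,s,v). if t = 0 then 0 else s * BR i) L)"
    by (induction L) (auto simp: cv_def algebra_simps)
  also have "sum_list (map (\<lambda>(t,i,s,v). if t = 0 then s * BT i else 0) L) = (\<Sum>x<3*k. BT x * net L 0 x)"
    by (rule triple_part) (use ok3 in auto)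
  also have "\<dots> = (\<Sum>u<k. BT (3*u) * net L 0 (3*u) + BT (3*u+1) * net L 0 (3*u+1) + BT (3*u+2) * net L 0 (3*u+2))"
    by (rule sum_3k)
  also have "\<dots> = (\<Sum>u<k. - 5 * net L 0 (3*u))"
  proof (rule sum.cong)
    fix u assume "u \<in> {..<k}"
    then have "net L 0 (3*u+1) = net L 0 (3*u)" "net L 0 (3*u+2) = - net L 0 (3*u)" using ok2 by auto
    then show "BT (3*u) * net L 0 (3*u) + BT (3*u+1) * net L 0 (3*u+1) + BT (3*u+2) * net L 0 (3*u+2) = - 5 * net L 0 (3*u)"
      using rel[of u] by (simp add: algebra_simps)
  qed simp
  also have "sum_list (map (\<lambda>(t,i,s,v). if t = 0 then 0 else s * BR i) L)
      = (\<Sum>x\<in>fst ` snd ` {c \<in> set L. fst c = 1}. BR x * net L 1 x)"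
  proof (rule rect_part)
    show "\<forall>c\<in>set L. fst c \<noteq> 0 \<longrightarrow> fst c = 1 \<and> fst (snd c) \<in> fst ` snd ` {c \<in> set L. fst c = 1}"
    proof (intro ballI impI)
      fix c assume c: "c \<in> set L" "fst c \<noteq> 0"
      then have c1: "fst c = 1" using ok3 by auto
      have "snd c \<in> snd ` {c \<in> set L. fst c = 1}" using c c1 by auto
      then show "fst c = 1 \<and> fst (snd c) \<in> fst ` snd ` {c \<in> set L. fst c = 1}" using c1 by auto
    qed
  qed simp
  also have "\<dots> = 0"
  proof (rule sum.neutral, rule ballI)
    fix x assume "x \<in> fst ` snd ` {c \<in> set L. fst c = 1}"
    then obtain c where c: "c \<in> set L" "fst c = 1" "x = fst (snd c)" by auto
    then show "BR x * net L 1 x = 0" using ok3 by auto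
  qed
  finally show ?thesis using ok1 by (simp add: sum_negf sum_distrib_left)
qed

definition sdec :: "nat \<Rightarrow> nat \<Rightarrow> nat \<times> nat" where
  "sdec s x = (if x \<le> s - 1 then (4*s - 1 - 2*x, 0)
    else if x = s then (1, 0) else if x = s + 1 then (1, 1)
    else if x \<le> 2*s - 1 then (4*s + 1 - 2*x, 0)
    else if x = 2*s then (2*s - 1, 0) else if x = 2*s + 1 then (4*s - 1, 0)
    else if x \<le> 3*s - 1 then (2*x - 4*s - 1, 1)
    else if x \<le> 4*s - 2 then (2*x - 4*s + 1, 1)
    else if x = 4*s - 1 then (2*s - 1, 1)
    else if x \<le> 6*s - 1 then (12*s - 2*x, 0)
    else if x = 6*s then (4*s - 1, 1)
    else (2*x - 12*s, 1))"

lemma sdec1: "2 \<le> s \<Longrightarrow> x \<le> s - 1 \<Longrightarrow> sdec s x = (4*s - 1 - 2*x, 0)"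
  by (simp add: sdec_def)
lemma sdec2: "2 \<le> s \<Longrightarrow> sdec s s = (1, 0)"
  by (simp add: sdec_def)
lemma sdec3: "2 \<le> s \<Longrightarrow> sdec s (s+1) = (1, 1)"
  by (simp add: sdec_def)
lemma sdec4: "2 \<le> s \<Longrightarrow> s + 2 \<le> x \<Longrightarrow> x \<le> 2*s - 1 \<Longrightarrow> sdec s x = (4*s + 1 - 2*x, 0)"
  unfolding sdec_def by (subst if_not_P, linarith)+ simp
lemma sdec5: "2 \<le> s \<Longrightarrow> sdec s (2*s) = (2*s - 1, 0)"
  unfolding sdec_def by (subst if_not_P, linarith)+ simp
lemma sdec6: "2 \<le> s \<Longrightarrow> sdec s (2*s+1) = (4*s - 1, 0)"
  unfolding sdec_def by (subst if_not_P, linarith)+ simp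
lemma sdec7: "2 \<le> s \<Longrightarrow> 2*s + 2 \<le> x \<Longrightarrow> x \<le> 3*s - 1 \<Longrightarrow> sdec s x = (2*x - 4*s - 1, 1)"
  unfolding sdec_def by (subst if_not_P, linarith)+ simp
lemma sdec8: "2 \<le> s \<Longrightarrow> 3*s \<le> x \<Longrightarrow> x \<le> 4*s - 2 \<Longrightarrow> sdec s x = (2*x - 4*s + 1, 1)"
  unfolding sdec_def by (subst if_not_P, linarith)+ simp
lemma sdec9: "2 \<le> s \<Longrightarrow> sdec s (4*s - 1) = (2*s - 1, 1)"
  unfolding sdec_def by (subst if_not_P, linarith)+ simp
lemma sdec10: "2 \<le> s \<Longrightarrow> 4*s \<le> x \<Longrightarrow> x \<le> 6*s - 1 \<Longrightarrow> sdec s x = (12*s - 2*x, 0)"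
  unfolding sdec_def by (subst if_not_P, linarith)+ simp
lemma sdec11: "2 \<le> s \<Longrightarrow> sdec s (6*s) = (4*s - 1, 1)"
  unfolding sdec_def by (subst if_not_P, linarith)+ simp
lemma sdec12: "2 \<le> s \<Longrightarrow> 6*s + 1 \<le> x \<Longrightarrow> sdec s x = (2*x - 12*s, 1)"
  unfolding sdec_def by (subst if_not_P, linarith)+ simp

definition sa :: "nat \<Rightarrow> nat \<Rightarrow> nat" where
  "sa s d = (if even d then 6*s - d div 2 else
     (if d div 2 = 0 then s else if d div 2 \<le> s - 2 then 2*s - d div 2 else if d div 2 = s - 1 then 2*s
      else if d div 2 \<le> 2*s - 2 then 2*s - 1 - d div 2 else 2*s + 1))"

lemma skolem_dec:
  assumes s: "2 \<le> s" and d: "1 \<le> d" "d \<le> 4*s"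
  shows "sdec s (sa s d) = (d, 0) \<and> sdec s (sa s d + d) = (d, 1) \<and> 1 \<le> sa s d \<and> sa s d + d \<le> 8*s"
proof (cases "even d")
  case True
  then obtain e where e: "d = 2*e" by auto
  have sa: "sa s d = 6*s - e" using e by (simp add: sa_def)
  have r: "1 \<le> e" "e \<le> 2*s" using d e by auto
  have "sdec s (6*s - e) = (d, 0)" using sdec10[OF s, of "6*s - e"] r e by simp
  moreover have "sdec s (6*s - e + d) = (d, 1)" using sdec12[OF s, of "6*s - e + d"] r e by simp
  ultimately show ?thesis using sa r e by (simp; arith)
next
  case False
  then obtain e where e: "d = 2*e+1" by (metis oddE)
  have de: "d div 2 = e" using e by simp
  have odd: "\<not> even d" using e by simp
  have r: "e \<le> 2*s - 1" using d e by auto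
  consider "e = 0" | "1 \<le> e" "e \<le> s - 2" | "e = s - 1" | "s \<le> e" "e \<le> 2*s - 2" | "e = 2*s - 1"
    using r s by linarith
  then show ?thesis
  proof cases
    case 1
    then have sa: "sa s d = s" using odd de unfolding sa_def by (simp; arith)
    show ?thesis using sa sdec2[OF s] sdec3[OF s] 1 e s by simp
  next
    case 2
    then have sa: "sa s d = 2*s - e" using odd de unfolding sa_def by (simp; arith)
    have "sdec s (2*s - e) = (d, 0)" using sdec4[OF s, of "2*s - e"] 2 e s by simp
    moreover have "sdec s (2*s - e + d) = (d, 1)" using sdec7[OF s, of "2*s - e + d"] 2 e s by simp
    ultimately show ?thesis using sa 2 e s by (simp; arith)
  next
    case 3
    then have sa: "sa s d = 2*s" using odd de s unfolding sa_def by (simp; arith)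
    have "sdec s (2*s) = (d, 0)" using sdec5[OF s] 3 e s by simp
    moreover have e2: "sa s d + d = 4*s - 1" using 3 e s sa by simp
    moreover have "sdec s (4*s - 1) = (d, 1)" using sdec9[OF s] 3 e s by simp
    ultimately show ?thesis using sa s by (simp only: e2; simp)
  next
    case 4
    then have sa: "sa s d = 2*s - 1 - e" using odd de s unfolding sa_def by (simp; arith)
    have "sdec s (2*s - 1 - e) = (d, 0)" using sdec1[OF s, of "2*s - 1 - e"] 4 e s by simp
    moreover have "sdec s (2*s - 1 - e + d) = (d, 1)" using sdec8[OF s, of "2*s - 1 - e + d"] 4 e s by simp
    ultimately show ?thesis using sa 4 e s by (simp; arith)
  next
    case 5
    then have sa: "sa s d = 2*s + 1" using odd de s unfolding sa_def by (simp; arith)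
    have "sdec s (2*s+1) = (d, 0)" using sdec6[OF s] 5 e s by simp
    moreover have e2: "sa s d + d = 6*s" using 5 e s sa by simp
    moreover have "sdec s (6*s) = (d, 1)" using sdec11[OF s] 5 e s by simp
    ultimately show ?thesis using sa s by (simp only: e2; simp)
  qed
qed

definition cell_ok :: "nat \<Rightarrow> nat \<Rightarrow> cell \<Rightarrow> bool" where
 "cell_ok k r c = (case c of (t,i,s,v) \<Rightarrow> (s = 1 \<or> s = -1) \<and> ((t = 0 \<and> i < 3*k \<and> 1 \<le> v \<and> v \<le> 5) \<or> (t = 1 \<and> i < r \<and> 1 \<le> v \<and> v \<le> 4)))"
definition good_tab :: "nat \<Rightarrow> nat \<Rightarrow> nat \<Rightarrow> nat \<Rightarrow> cell list list \<Rightarrow> bool" where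
 "good_tab k r H W tab \<longleftrightarrow> length tab = H \<and> list_all (\<lambda>row. length row = W) tab \<and> list_all (list_all (cell_ok k r)) tab
   \<and> list_all (line_ok k) tab \<and> list_all (\<lambda>j. line_ok k (map (\<lambda>row. row ! j) tab)) [0..<W]
   \<and> distinct (concat (map (map (\<lambda>(t,i,s,v). (t,i,v))) tab))"
definition tab_C99 :: "cell list list" where
 "tab_C99 = [
  [(0,0,1,1), (0,1,1,1), (0,2,-1,4), (1,0,-1,1), (1,0,1,4), (1,1,1,4), (1,1,-1,3), (1,2,-1,1), (1,2,1,4)],
  [(0,0,-1,4), (0,1,-1,3), (0,2,1,1), (1,0,1,3), (1,0,-1,2), (1,1,-1,2), (1,1,1,1), (1,2,1,3), (1,2,-1,2)],
  [(0,0,1,2), (0,2,-1,5), (0,1,1,4), (1,3,1,3), (1,3,-1,2), (1,4,-1,2), (1,4,1,4), (1,5,1,3), (1,5,-1,2)],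
  [(0,1,1,5), (0,0,1,5), (0,2,-1,3), (1,3,-1,4), (1,3,1,1), (1,4,1,1), (1,4,-1,3), (1,5,-1,1), (1,5,1,4)],
  [(0,2,-1,2), (0,1,1,2), (0,0,1,3), (1,6,-1,1), (1,6,1,2), (1,7,-1,1), (1,7,1,3), (1,8,-1,3), (1,8,1,2)],
  [(0,8,-1,3), (0,6,-1,1), (0,8,1,5), (0,3,1,5), (0,3,-1,4), (0,3,1,1), (0,4,1,4), (0,5,-1,5), (0,6,1,3)],
  [(0,6,-1,2), (0,6,1,5), (0,7,-1,2), (0,4,1,1), (0,4,-1,3), (0,5,-1,2), (0,3,1,2), (0,4,1,5), (0,7,1,1)],
  [(0,8,1,4), (0,7,-1,4), (0,7,1,3), (0,5,-1,4), (0,5,1,3), (0,4,1,2), (0,5,-1,1), (0,3,1,3), (0,8,-1,1)],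
  [(0,6,1,4), (0,7,1,5), (0,8,-1,2), (1,6,1,3), (1,6,-1,4), (1,7,1,4), (1,7,-1,2), (1,8,1,1), (1,8,-1,4)]]"

definition tab_C913 :: "cell list list" where
 "tab_C913 = [
  [(0,1,-1,5), (0,2,1,2), (0,0,-1,1), (0,0,1,4), (0,0,-1,5), (0,9,-1,3), (0,10,-1,3), (0,11,1,1), (0,14,1,1), (0,13,-1,4), (0,12,-1,1), (1,0,-1,4), (1,0,1,3)],
  [(0,2,1,4), (0,0,-1,2), (0,2,1,1), (0,2,-1,5), (0,1,-1,3), (0,11,1,4), (0,9,-1,5), (0,10,-1,2), (0,12,-1,5), (0,14,1,2), (0,13,-1,5), (1,0,1,2), (1,0,-1,1)],
  [(0,0,-1,3), (0,1,-1,4), (0,1,-1,2), (0,1,1,1), (0,2,1,3), (0,10,-1,5), (0,9,-1,4), (0,11,1,3), (0,12,-1,2), (0,13,-1,3), (0,14,1,3), (1,1,-1,3), (1,1,1,1)],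
  [(0,4,-1,2), (0,5,1,1), (0,5,1,3), (0,3,-1,2), (0,5,-1,5), (0,10,1,1), (0,9,1,2), (0,11,-1,5), (0,13,-1,2), (0,12,-1,3), (0,14,1,5), (1,1,1,4), (1,1,-1,2)],
  [(0,5,1,4), (0,3,-1,5), (0,4,-1,5), (0,4,-1,3), (0,4,1,4), (0,10,-1,4), (0,11,1,2), (0,9,-1,1), (0,12,1,4), (0,13,1,1), (0,14,-1,4), (1,2,-1,1), (1,2,1,3)],
  [(0,3,-1,3), (0,4,-1,1), (0,3,-1,4), (0,5,1,2), (0,3,1,1), (0,15,-1,5), (0,17,1,5), (0,17,-1,4), (0,18,-1,5), (0,20,1,4), (0,20,-1,2), (0,15,1,4), (0,18,1,3)],
  [(0,7,1,3), (0,8,-1,4), (0,7,1,2), (0,6,1,5), (0,7,-1,1), (0,16,-1,1), (0,16,1,3), (0,17,1,2), (0,18,1,1), (0,19,-1,1), (0,18,-1,4), (0,17,-1,3), (0,19,1,3)],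
  [(0,8,-1,5), (0,6,1,3), (0,6,1,4), (0,7,1,4), (0,6,-1,1), (0,15,1,3), (0,16,-1,4), (0,15,-1,1), (0,19,-1,2), (0,19,1,4), (0,20,1,1), (0,16,1,2), (0,20,-1,3)],
  [(0,6,1,2), (0,7,1,5), (0,8,-1,3), (0,8,-1,1), (0,8,1,2), (0,16,1,5), (0,17,-1,1), (0,15,1,2), (0,19,1,5), (0,20,-1,5), (0,18,1,2), (1,2,1,4), (1,2,-1,2)]]"

definition tab_C139 :: "cell list list" where
 "tab_C139 = [
  [(0,1,-1,5), (0,2,1,4), (0,0,-1,3), (0,4,-1,2), (0,5,1,4), (0,3,-1,3), (0,7,1,3), (0,8,-1,5), (0,6,1,2)],
  [(0,2,1,2), (0,0,-1,2), (0,1,-1,4), (0,5,1,1), (0,3,-1,5), (0,4,-1,1), (0,8,-1,4), (0,6,1,3), (0,7,1,5)],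
  [(0,0,-1,1), (0,2,1,1), (0,1,-1,2), (0,5,1,3), (0,4,-1,5), (0,3,-1,4), (0,7,1,2), (0,6,1,4), (0,8,-1,3)],
  [(0,0,1,4), (0,2,-1,5), (0,1,1,1), (0,3,-1,2), (0,4,-1,3), (0,5,1,2), (0,6,1,5), (0,7,1,4), (0,8,-1,1)],
  [(0,0,-1,5), (0,1,-1,3), (0,2,1,3), (0,5,-1,5), (0,4,1,4), (0,3,1,1), (0,7,-1,1), (0,6,-1,1), (0,8,1,2)],
  [(0,9,-1,3), (0,11,1,4), (0,10,-1,5), (0,10,1,1), (0,10,-1,4), (0,15,-1,5), (0,16,-1,1), (0,15,1,3), (0,16,1,5)],
  [(0,10,-1,3), (0,9,-1,5), (0,9,-1,4), (0,9,1,2), (0,11,1,2), (0,17,1,5), (0,16,1,3), (0,16,-1,4), (0,17,-1,1)],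
  [(0,11,1,1), (0,10,-1,2), (0,11,1,3), (0,11,-1,5), (0,9,-1,1), (0,17,-1,4), (0,17,1,2), (0,15,-1,1), (0,15,1,2)],
  [(0,14,1,1), (0,12,-1,5), (0,12,-1,2), (0,13,-1,2), (0,12,1,4), (0,18,-1,5), (0,18,1,1), (0,19,-1,2), (0,19,1,5)],
  [(0,13,-1,4), (0,14,1,2), (0,13,-1,3), (0,12,-1,3), (0,13,1,1), (0,20,1,4), (0,19,-1,1), (0,19,1,4), (0,20,-1,5)],
  [(0,12,-1,1), (0,13,-1,5), (0,14,1,3), (0,14,1,5), (0,14,-1,4), (0,20,-1,2), (0,18,-1,4), (0,20,1,1), (0,18,1,2)],
  [(1,0,-1,4), (1,0,1,2), (1,1,-1,3), (1,1,1,4), (1,2,-1,1), (0,15,1,4), (0,17,-1,3), (0,16,1,2), (1,2,1,4)],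
  [(1,0,1,3), (1,0,-1,1), (1,1,1,1), (1,1,-1,2), (1,2,1,3), (0,18,1,3), (0,19,1,3), (0,20,-1,3), (1,2,-1,2)]]"

definition tab_C1313 :: "cell list list" where
 "tab_C1313 = [
  [(0,0,1,5), (0,1,1,3), (0,2,-1,5), (1,0,-1,3), (1,0,1,1), (1,1,1,3), (1,1,-1,2), (1,2,-1,4), (1,2,1,3), (1,3,-1,2), (1,3,1,4), (1,4,1,3), (1,4,-1,1)],
  [(0,0,-1,3), (0,1,-1,1), (0,2,1,3), (1,0,1,2), (1,0,-1,4), (1,1,-1,1), (1,1,1,4), (1,2,1,1), (1,2,-1,2), (1,3,1,1), (1,3,-1,3), (1,4,-1,4), (1,4,1,2)],
  [(0,0,1,4), (0,2,-1,4), (0,1,1,5), (1,5,1,4), (1,5,-1,1), (1,6,-1,3), (1,6,1,1), (1,7,1,3), (1,7,-1,4), (1,8,-1,3), (1,8,1,4), (1,9,1,1), (1,9,-1,2)],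
  [(0,1,1,2), (0,0,1,2), (0,2,-1,1), (1,5,-1,3), (1,5,1,2), (1,6,1,4), (1,6,-1,2), (1,7,-1,1), (1,7,1,2), (1,8,1,2), (1,8,-1,1), (1,9,-1,4), (1,9,1,3)],
  [(0,2,-1,2), (0,1,1,4), (0,0,1,1), (1,10,-1,4), (1,10,1,2), (1,11,-1,1), (1,11,1,2), (1,12,1,2), (1,13,1,3), (1,13,-1,1), (1,14,1,4), (1,12,-1,3), (1,14,-1,2)],
  [(1,15,-1,2), (1,15,1,1), (1,16,1,3), (0,3,1,2), (0,3,-1,4), (0,3,1,3), (0,4,1,4), (0,5,-1,1), (1,13,-1,2), (1,13,1,4), (1,14,-1,3), (1,16,-1,1), (1,14,1,1)],
  [(1,15,1,3), (1,15,-1,4), (1,16,-1,2), (0,4,1,2), (0,4,-1,3), (0,5,-1,5), (0,3,1,1), (0,4,1,5), (1,17,1,4), (1,17,-1,2), (1,18,-1,2), (1,16,1,4), (1,18,1,4)],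
  [(1,19,1,4), (1,19,-1,1), (1,20,1,1), (0,5,-1,2), (0,5,1,3), (0,4,1,1), (0,5,-1,4), (0,3,1,5), (1,17,-1,1), (1,17,1,3), (1,18,1,1), (1,20,-1,2), (1,18,-1,3)],
  [(1,19,-1,3), (1,19,1,2), (1,21,-1,2), (1,10,1,3), (1,10,-1,1), (1,11,1,3), (1,11,-1,4), (1,12,-1,4), (0,6,1,4), (0,7,1,5), (0,8,-1,2), (1,12,1,1), (1,21,1,3)],
  [(1,22,-1,2), (1,22,1,4), (1,21,1,4), (1,23,-1,2), (1,23,1,1), (1,24,-1,1), (1,24,1,4), (1,25,1,1), (1,25,-1,4), (0,6,1,1), (0,7,1,1), (0,8,-1,1), (1,21,-1,1)],
  [(1,22,1,1), (1,22,-1,3), (1,26,-1,1), (1,23,1,4), (1,23,-1,3), (1,24,1,3), (1,24,-1,2), (1,25,-1,3), (1,25,1,2), (1,26,1,4), (0,6,1,3), (0,7,1,3), (0,8,-1,3)],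
  [(1,27,-1,4), (1,27,1,3), (1,26,1,3), (1,28,1,4), (1,28,-1,1), (1,29,-1,3), (1,29,1,4), (1,30,1,2), (0,8,-1,4), (1,26,-1,2), (1,30,-1,4), (0,6,1,5), (0,7,1,2)],
  [(1,27,1,2), (1,27,-1,1), (1,20,-1,4), (1,28,-1,2), (1,28,1,3), (1,29,1,2), (1,29,-1,1), (1,30,-1,1), (0,7,1,4), (0,8,-1,5), (1,30,1,3), (1,20,1,3), (0,6,1,2)]]"

definition tab_T9 :: "cell list list" where
 "tab_T9 = [
  [(0,0,-1,3), (0,1,-1,3), (0,2,1,1), (0,5,1,1), (0,4,-1,4), (0,3,-1,1), (1,0,-1,4), (1,0,1,3)],
  [(0,2,1,4), (0,0,-1,5), (0,1,-1,2), (0,3,-1,5), (0,5,1,2), (0,4,-1,5), (1,0,1,2), (1,0,-1,1)],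
  [(0,1,-1,5), (0,0,-1,4), (0,2,1,3), (0,3,-1,2), (0,4,-1,3), (0,5,1,3), (1,1,-1,3), (1,1,1,1)],
  [(0,1,1,1), (0,0,1,2), (0,2,-1,5), (0,4,-1,2), (0,3,-1,3), (0,5,1,5), (1,1,1,4), (1,1,-1,2)],
  [(0,1,-1,4), (0,2,1,2), (0,0,-1,1), (0,3,1,4), (0,4,1,1), (0,5,-1,4), (1,2,-1,1), (1,2,1,3)],
  [(0,6,-1,5), (0,8,1,5), (0,8,-1,4), (0,9,-1,5), (0,11,1,4), (0,11,-1,2), (0,6,1,4), (0,9,1,3)],
  [(0,7,-1,1), (0,7,1,3), (0,8,1,2), (0,9,1,1), (0,10,-1,1), (0,9,-1,4), (0,8,-1,3), (0,10,1,3)],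
  [(0,6,1,3), (0,7,-1,4), (0,6,-1,1), (0,10,-1,2), (0,10,1,4), (0,11,1,1), (0,7,1,2), (0,11,-1,3)],
  [(0,7,1,5), (0,8,-1,1), (0,6,1,2), (0,10,1,5), (0,11,-1,5), (0,9,1,2), (1,2,1,4), (1,2,-1,2)]]"

definition tab_T13 :: "cell list list" where
 "tab_T13 = [
  [(0,0,-1,3), (0,1,-1,3), (0,2,1,1), (0,5,1,1), (0,4,-1,4), (0,3,-1,1), (1,0,-1,4), (1,0,1,3)],
  [(0,2,1,4), (0,0,-1,5), (0,1,-1,2), (0,3,-1,5), (0,5,1,2), (0,4,-1,5), (1,0,1,2), (1,0,-1,1)],
  [(0,1,-1,5), (0,0,-1,4), (0,2,1,3), (0,3,-1,2), (0,4,-1,3), (0,5,1,3), (1,1,-1,3), (1,1,1,1)],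
  [(0,1,1,1), (0,0,1,2), (0,2,-1,5), (0,4,-1,2), (0,3,-1,3), (0,5,1,5), (1,1,1,4), (1,1,-1,2)],
  [(0,1,-1,4), (0,2,1,2), (0,0,-1,1), (0,3,1,4), (0,4,1,1), (0,5,-1,4), (1,2,-1,1), (1,2,1,3)],
  [(0,6,-1,5), (0,8,1,5), (0,8,-1,4), (0,9,-1,5), (0,11,1,4), (0,11,-1,2), (0,6,1,4), (0,9,1,3)],
  [(0,7,-1,1), (0,7,1,3), (0,8,1,2), (0,9,1,1), (0,10,-1,1), (0,9,-1,4), (0,8,-1,3), (0,10,1,3)],
  [(0,6,1,3), (0,7,-1,4), (0,6,-1,1), (0,10,-1,2), (0,10,1,4), (0,11,1,1), (0,7,1,2), (0,11,-1,3)],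
  [(0,7,1,5), (0,8,-1,1), (0,6,1,2), (0,10,1,5), (0,11,-1,5), (0,9,1,2), (1,2,1,4), (1,2,-1,2)],
  [(1,3,1,1), (1,3,-1,2), (1,4,1,2), (1,4,-1,1), (1,7,1,1), (1,7,-1,2), (1,8,1,2), (1,8,-1,1)],
  [(1,3,-1,3), (1,3,1,4), (1,4,-1,4), (1,4,1,3), (1,7,-1,3), (1,7,1,4), (1,8,-1,4), (1,8,1,3)],
  [(1,5,1,3), (1,5,-1,4), (1,6,-1,1), (1,6,1,2), (1,9,1,3), (1,9,-1,4), (1,10,-1,1), (1,10,1,2)],
  [(1,5,-1,1), (1,5,1,2), (1,6,1,3), (1,6,-1,4), (1,9,-1,1), (1,9,1,2), (1,10,1,3), (1,10,-1,4)]]"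

definition tab_L9 :: "cell list list" where
 "tab_L9 = [
  [(0,0,-1,3), (0,2,1,4), (0,1,-1,5), (0,1,1,1), (0,1,-1,4), (0,6,-1,5), (0,7,-1,1), (0,6,1,3), (0,7,1,5)],
  [(0,1,-1,3), (0,0,-1,5), (0,0,-1,4), (0,0,1,2), (0,2,1,2), (0,8,1,5), (0,7,1,3), (0,7,-1,4), (0,8,-1,1)],
  [(0,2,1,1), (0,1,-1,2), (0,2,1,3), (0,2,-1,5), (0,0,-1,1), (0,8,-1,4), (0,8,1,2), (0,6,-1,1), (0,6,1,2)],
  [(0,5,1,1), (0,3,-1,5), (0,3,-1,2), (0,4,-1,2), (0,3,1,4), (0,9,-1,5), (0,9,1,1), (0,10,-1,2), (0,10,1,5)],
  [(0,4,-1,4), (0,5,1,2), (0,4,-1,3), (0,3,-1,3), (0,4,1,1), (0,11,1,4), (0,10,-1,1), (0,10,1,4), (0,11,-1,5)],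
  [(0,3,-1,1), (0,4,-1,5), (0,5,1,3), (0,5,1,5), (0,5,-1,4), (0,11,-1,2), (0,9,-1,4), (0,11,1,1), (0,9,1,2)],
  [(1,0,-1,4), (1,0,1,2), (1,1,-1,3), (1,1,1,4), (1,2,-1,1), (0,6,1,4), (0,8,-1,3), (0,7,1,2), (1,2,1,4)],
  [(1,0,1,3), (1,0,-1,1), (1,1,1,1), (1,1,-1,2), (1,2,1,3), (0,9,1,3), (0,10,1,3), (0,11,-1,3), (1,2,-1,2)]]"

definition tab_L13 :: "cell list list" where
 "tab_L13 = [
  [(0,0,-1,3), (0,2,1,4), (0,1,-1,5), (0,1,1,1), (0,1,-1,4), (0,6,-1,5), (0,7,-1,1), (0,6,1,3), (0,7,1,5), (1,3,1,1), (1,3,-1,2), (1,4,1,2), (1,4,-1,1)],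
  [(0,1,-1,3), (0,0,-1,5), (0,0,-1,4), (0,0,1,2), (0,2,1,2), (0,8,1,5), (0,7,1,3), (0,7,-1,4), (0,8,-1,1), (1,3,-1,3), (1,3,1,4), (1,4,-1,4), (1,4,1,3)],
  [(0,2,1,1), (0,1,-1,2), (0,2,1,3), (0,2,-1,5), (0,0,-1,1), (0,8,-1,4), (0,8,1,2), (0,6,-1,1), (0,6,1,2), (1,5,1,3), (1,5,-1,4), (1,6,-1,1), (1,6,1,2)],
  [(0,5,1,1), (0,3,-1,5), (0,3,-1,2), (0,4,-1,2), (0,3,1,4), (0,9,-1,5), (0,9,1,1), (0,10,-1,2), (0,10,1,5), (1,5,-1,1), (1,5,1,2), (1,6,1,3), (1,6,-1,4)],
  [(0,4,-1,4), (0,5,1,2), (0,4,-1,3), (0,3,-1,3), (0,4,1,1), (0,11,1,4), (0,10,-1,1), (0,10,1,4), (0,11,-1,5), (1,7,1,1), (1,7,-1,2), (1,8,1,2), (1,8,-1,1)],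
  [(0,3,-1,1), (0,4,-1,5), (0,5,1,3), (0,5,1,5), (0,5,-1,4), (0,11,-1,2), (0,9,-1,4), (0,11,1,1), (0,9,1,2), (1,7,-1,3), (1,7,1,4), (1,8,-1,4), (1,8,1,3)],
  [(1,0,-1,4), (1,0,1,2), (1,1,-1,3), (1,1,1,4), (1,2,-1,1), (0,6,1,4), (0,8,-1,3), (0,7,1,2), (1,2,1,4), (1,9,1,3), (1,9,-1,4), (1,10,-1,1), (1,10,1,2)],
  [(1,0,1,3), (1,0,-1,1), (1,1,1,1), (1,1,-1,2), (1,2,1,3), (0,9,1,3), (0,10,1,3), (0,11,-1,3), (1,2,-1,2), (1,9,-1,1), (1,9,1,2), (1,10,1,3), (1,10,-1,4)]]"

definition tab_Q88 :: "cell list list" where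
 "tab_Q88 = [
  [(1,0,1,1), (1,0,-1,2), (1,1,1,2), (1,1,-1,1), (1,4,1,1), (1,4,-1,2), (1,5,1,2), (1,5,-1,1)],
  [(1,0,-1,3), (1,0,1,4), (1,1,-1,4), (1,1,1,3), (1,4,-1,3), (1,4,1,4), (1,5,-1,4), (1,5,1,3)],
  [(1,2,1,3), (1,2,-1,4), (1,3,-1,1), (1,3,1,2), (1,6,1,3), (1,6,-1,4), (1,7,-1,1), (1,7,1,2)],
  [(1,2,-1,1), (1,2,1,2), (1,3,1,3), (1,3,-1,4), (1,6,-1,1), (1,6,1,2), (1,7,1,3), (1,7,-1,4)],
  [(1,8,1,1), (1,8,-1,2), (1,9,1,2), (1,9,-1,1), (1,12,1,1), (1,12,-1,2), (1,13,1,2), (1,13,-1,1)],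
  [(1,8,-1,3), (1,8,1,4), (1,9,-1,4), (1,9,1,3), (1,12,-1,3), (1,12,1,4), (1,13,-1,4), (1,13,1,3)],
  [(1,10,1,3), (1,10,-1,4), (1,11,-1,1), (1,11,1,2), (1,14,1,3), (1,14,-1,4), (1,15,-1,1), (1,15,1,2)],
  [(1,10,-1,1), (1,10,1,2), (1,11,1,3), (1,11,-1,4), (1,14,-1,1), (1,14,1,2), (1,15,1,3), (1,15,-1,4)]]"

lemma good_C99: "good_tab 3 9 9 9 tab_C99" by code_simp
lemma good_C913: "good_tab 7 3 9 13 tab_C913" by code_simp
lemma good_C139: "good_tab 7 3 13 9 tab_C139" by code_simp
lemma good_C1313: "good_tab 3 31 13 13 tab_C1313" by code_simp
lemma good_T9: "good_tab 4 3 9 8 tab_T9" by code_simp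
lemma good_T13: "good_tab 4 11 13 8 tab_T13" by code_simp
lemma good_L9: "good_tab 4 3 8 9 tab_L9" by code_simp
lemma good_L13: "good_tab 4 11 8 13 tab_L13" by code_simp
lemma good_Q88: "good_tab 0 16 8 8 tab_Q88" by code_simp

lemma good_row: "good_tab k r H W tab \<Longrightarrow> li < H \<Longrightarrow> line_ok k (tab ! li) \<and> length (tab ! li) = W"
  by (auto simp: good_tab_def list_all_iff)

lemma good_col: "good_tab k r H W tab \<Longrightarrow> lj < W \<Longrightarrow> line_ok k (map (\<lambda>row. row ! lj) tab) \<and> length tab = H"
  by (auto simp: good_tab_def list_all_iff)

lemma good_cell: "good_tab k r H W tab \<Longrightarrow> li < H \<Longrightarrow> lj < W \<Longrightarrow> cell_ok k r (tab ! li ! lj)"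
proof -
  assume g: "good_tab k r H W tab" and a: "li < H" "lj < W"
  have r1: "tab ! li \<in> set tab" "length (tab ! li) = W" using g a by (auto simp: good_tab_def list_all_iff)
  then have "tab ! li ! lj \<in> set (tab ! li)" using a by simp
  then show ?thesis using g r1 by (auto simp: good_tab_def list_all_iff)
qed

lemma nth_concat_rect:
  "(\<forall>row\<in>set xss. length row = W) \<Longrightarrow> li < length xss \<Longrightarrow> lj < W \<Longrightarrow> concat xss ! (li * W + lj) = xss ! li ! lj"
proof (induction xss arbitrary: li)
  case Nil then show ?case by simp
next
  case (Cons x xs)
  show ?case
  proof (cases li)
    case 0 then show ?thesis using Cons.prems by (simp add: nth_append)
  next
    case (Suc l)
    have "concat (x # xs) ! (li * W + lj) = concat xs ! (l * W + lj)"
      using Cons.prems Suc by (simp add: nth_append algebra_simps)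
    then show ?thesis using Cons Suc by simp
  qed
qed

definition key :: "cell \<Rightarrow> nat \<times> nat \<times> int" where "key c = (case c of (t,i,s,v) \<Rightarrow> (t,i,v))"

lemma good_inj:
  assumes g: "good_tab k r H W tab" and "li1 < H" "lj1 < W" "li2 < H" "lj2 < W"
    and eq: "key (tab ! li1 ! lj1) = key (tab ! li2 ! lj2)"
  shows "li1 = li2 \<and> lj1 = lj2"
proof -
  let ?xss = "map (map key) tab"
  have len: "length tab = H" and rows: "\<forall>row\<in>set tab. length row = W"
    and dist: "distinct (concat ?xss)"
    using g by (auto simp: good_tab_def list_all_iff key_def[abs_def] case_prod_unfold)
  have rows': "\<forall>row\<in>set ?xss. length row = W" using rows by auto
  have n1: "concat ?xss ! (li1 * W + lj1) = key (tab ! li1 ! lj1)"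
    using nth_concat_rect[OF rows', of li1 lj1] assms len rows by simp
  have n2: "concat ?xss ! (li2 * W + lj2) = key (tab ! li2 ! lj2)"
    using nth_concat_rect[OF rows', of li2 lj2] assms len rows by simp
  have lc: "length (concat ?xss) = H * W"
    using rows len by (simp add: length_concat sum_list_triv comp_def cong: map_cong)
  have b1: "li1 * W + lj1 < H * W"
  proof -
    have "Suc li1 * W \<le> H * W" using \<open>li1 < H\<close> by (intro mult_le_mono1) simp
    then show ?thesis using \<open>lj1 < W\<close> by simp
  qed
  have b2: "li2 * W + lj2 < H * W"
  proof -
    have "Suc li2 * W \<le> H * W" using \<open>li2 < H\<close> by (intro mult_le_mono1) simp
    then show ?thesis using \<open>lj2 < W\<close> by simp
  qed
  have "li1 * W + lj1 = li2 * W + lj2"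
    using nth_eq_iff_index_eq[OF dist, of "li1 * W + lj1" "li2 * W + lj2"] b1 b2 lc n1 n2 eq by simp
  then have "(li1 * W + lj1) div W = (li2 * W + lj2) div W" "(li1 * W + lj1) mod W = (li2 * W + lj2) mod W" by simp_all
  then show ?thesis using assms by simp
qed

definition hh :: "nat \<Rightarrow> nat" where "hh m = (if m mod 8 = 1 then 9 else 13)"
definition pp :: "nat \<Rightarrow> nat" where "pp m = (m - hh m) div 8"
definition ctab :: "nat \<Rightarrow> nat \<Rightarrow> cell list list" where
  "ctab m n = (if hh m = 9 then (if hh n = 9 then tab_C99 else tab_C913) else (if hh n = 9 then tab_C139 else tab_C1313))"
definition kC :: "nat \<Rightarrow> nat \<Rightarrow> nat" where "kC m n = (if hh m = hh n then 3 else 7)"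
definition rC :: "nat \<Rightarrow> nat \<Rightarrow> nat" where
  "rC m n = (if hh m = 9 then (if hh n = 9 then 9 else 3) else (if hh n = 9 then 3 else 31))"
definition rT :: "nat \<Rightarrow> nat" where "rT m = (if hh m = 9 then 3 else 11)"
definition ttab :: "nat \<Rightarrow> cell list list" where "ttab m = (if hh m = 9 then tab_T9 else tab_T13)"
definition ltab :: "nat \<Rightarrow> cell list list" where "ltab n = (if hh n = 9 then tab_L9 else tab_L13)"
definition bidx :: "nat \<Rightarrow> nat \<Rightarrow> nat" where "bidx h x = (if x < h then 0 else (x - h) div 8 + 1)"
definition lidx :: "nat \<Rightarrow> nat \<Rightarrow> nat" where "lidx h x = (if x < h then x else (x - h) mod 8)"
definition tsel :: "nat \<Rightarrow> nat \<Rightarrow> nat \<Rightarrow> nat \<Rightarrow> cell list list" where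
  "tsel m n I J = (if I = 0 then (if J = 0 then ctab m n else ttab m) else (if J = 0 then ltab n else tab_Q88))"
definition kk :: "nat \<Rightarrow> nat \<Rightarrow> nat \<Rightarrow> nat \<Rightarrow> nat" where
  "kk m n I J = (if I = 0 then (if J = 0 then kC m n else 4) else (if J = 0 then 4 else 0))"
definition rr :: "nat \<Rightarrow> nat \<Rightarrow> nat \<Rightarrow> nat \<Rightarrow> nat" where
  "rr m n I J = (if I = 0 then (if J = 0 then rC m n else rT m) else (if J = 0 then rT n else 16))"
definition ht :: "nat \<Rightarrow> nat \<Rightarrow> nat" where "ht m I = (if I = 0 then hh m else 8)"
definition toff :: "nat \<Rightarrow> nat \<Rightarrow> nat \<Rightarrow> nat \<Rightarrow> nat" where
  "toff m n I J = (if I = 0 then (if J = 0 then 0 else kC m n + 4*(J-1)) else (if J = 0 then kC m n + 4*pp n + 4*(I-1) else 0))"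
definition roff :: "nat \<Rightarrow> nat \<Rightarrow> nat \<Rightarrow> nat \<Rightarrow> nat" where
  "roff m n I J = (if I = 0 then (if J = 0 then 0 else rC m n + rT m * (J-1))
     else (if J = 0 then rC m n + rT m * pp n + rT n * (I-1)
     else rC m n + rT m * pp n + rT n * pp m + 16*((I-1) * pp n + (J-1))))"
definition T0 :: "nat \<Rightarrow> nat \<Rightarrow> nat" where "T0 m n = kC m n + 4*(pp m + pp n)"
definition R0 :: "nat \<Rightarrow> nat \<Rightarrow> nat" where "R0 m n = rC m n + rT m * pp n + rT n * pp m + 16 * pp m * pp n"
definition pos :: "nat \<Rightarrow> nat \<Rightarrow> nat \<Rightarrow> nat" where
  "pos s g r = (if r = 0 then g + 1 else if r = 1 then 4*s + sa s (g+1) else 4*s + sa s (g+1) + (g+1))"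
definition BT :: "nat \<Rightarrow> nat \<Rightarrow> nat \<Rightarrow> nat \<Rightarrow> nat \<Rightarrow> nat \<Rightarrow> nat \<Rightarrow> int" where
  "BT m n c k I J x = 5 * (int (pos (c * T0 m n div 4) (k * T0 m n + toff m n I J + x div 3) (x mod 3)) - 1)"
definition BR :: "nat \<Rightarrow> nat \<Rightarrow> nat \<Rightarrow> nat \<Rightarrow> nat \<Rightarrow> nat \<Rightarrow> nat \<Rightarrow> int" where
  "BR m n c k I J x = 15 * int (c * T0 m n) + 4 * int (k * R0 m n + roff m n I J + x)"
definition Aval :: "nat \<Rightarrow> nat \<Rightarrow> nat \<Rightarrow> nat \<Rightarrow> nat \<Rightarrow> nat \<Rightarrow> int" where
  "Aval m n c k i j = cv (BT m n c k (bidx (hh m) i) (bidx (hh n) j)) (BR m n c k (bidx (hh m) i) (bidx (hh n) j))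
      (tsel m n (bidx (hh m) i) (bidx (hh n) j) ! lidx (hh m) i ! lidx (hh n) j)"

lemma hh_cases: "hh m = 9 \<or> hh m = 13" by (simp add: hh_def)

lemma m_decomp: assumes "m mod 4 = 1" "9 \<le> m" shows "m = hh m + 8 * pp m"
proof -
  have "m mod 8 = 1 \<or> m mod 8 = 5" using assms(1) by presburger
  then show ?thesis
  proof
    assume a: "m mod 8 = 1"
    then have "(m - 9) mod 8 = 0" using assms(2) by presburger
    then show ?thesis using a assms(2) by (simp add: hh_def pp_def) presburger
  next
    assume a: "m mod 8 = 5"
    then have "13 \<le> m" using assms(2) by presburger
    then have "(m - 13) mod 8 = 0" using a by presburger
    then show ?thesis using a \<open>13 \<le> m\<close> by (simp add: hh_def pp_def) presburger
  qed
qed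

lemma good_tsel: "good_tab (kk m n I J) (rr m n I J) (ht m I) (ht n J) (tsel m n I J)"
  using hh_cases[of m] hh_cases[of n] good_C99 good_C913 good_C139 good_C1313 good_T9 good_T13
    good_L9 good_L13 good_Q88
  by (auto simp: kk_def rr_def ht_def tsel_def ctab_def kC_def rC_def rT_def ttab_def ltab_def)

lemma BT_rel: "BT m n c k I J (3*u+2) = BT m n c k I J (3*u) + BT m n c k I J (3*u+1) + 5"
proof -
  have e: "(3*u+2) div 3 = u" "(3*u+2) mod 3 = 2" "(3*u+1) div 3 = u" "(3*u+1) mod 3 = 1"
    "(3*u) div 3 = u" "(3*u) mod 3 = 0" by presburger+
  show ?thesis unfolding BT_def e by (simp add: pos_def algebra_simps)
qed

lemma sum_split_blocks:
  "(\<Sum>j<w + 8*q. f j) = (\<Sum>j<w. f j) + (\<Sum>J<q. \<Sum>j<8. f (w + 8*J + j))" for f :: "nat \<Rightarrow> int"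
proof (induction q)
  case 0 then show ?case by simp
next
  case (Suc q)
  have "(\<Sum>j<w + 8 * Suc q. f j) = (\<Sum>j<w + 8*q. f j) + (\<Sum>j<8. f (w + 8*q + j))"
  proof -
    have e: "w + 8 * Suc q = (w + 8*q) + 8" by simp
    show ?thesis unfolding e by (simp add: sum.lessThan_Suc numeral_eq_Suc add.assoc)
  qed
  then show ?case using Suc by simp
qed

lemma bidx_lt: "bidx h j = 0 \<longleftrightarrow> j < h" by (simp add: bidx_def)
lemma blk0: "j < h \<Longrightarrow> bidx h j = 0 \<and> lidx h j = j" by (simp add: bidx_def lidx_def)
lemma blkJ: "j' < 8 \<Longrightarrow> bidx h (h + 8*J + j') = J + 1 \<and> lidx h (h + 8*J + j') = j'"
  by (simp add: bidx_def lidx_def)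
lemma lidx_lt: "lidx h i < ht' \<Longrightarrow> True" by simp

lemma lidx_bound: "lidx (hh m) i < ht m (bidx (hh m) i)"
  by (simp add: lidx_def bidx_def ht_def)

lemma row_sum_zero:
  assumes n: "n mod 4 = 1" "9 \<le> n"
  shows "(\<Sum>j<n. Aval m n c k i j) = 0"
proof -
  let ?h = "hh m" and ?w = "hh n" and ?I = "bidx (hh m) i" and ?li = "lidx (hh m) i"
  have li: "?li < ht m ?I" by (rule lidx_bound)
  have ndec: "n = ?w + 8 * pp n" by (rule m_decomp[OF n])
  have blk: "\<And>J. J \<le> pp n \<Longrightarrow> sum_list (map (cv (BT m n c k ?I J) (BR m n c k ?I J)) (tsel m n ?I J ! ?li)) = 0"
  proof -
    fix J
    have g: "good_tab (kk m n ?I J) (rr m n ?I J) (ht m ?I) (ht n J) (tsel m n ?I J)" by (rule good_tsel)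
    show "sum_list (map (cv (BT m n c k ?I J) (BR m n c k ?I J)) (tsel m n ?I J ! ?li)) = 0"
      by (rule line_sum_zero[OF conjunct1[OF good_row[OF g li]]]) (rule BT_rel)
  qed
  have part0: "(\<Sum>j<?w. Aval m n c k i j) = 0"
  proof -
    have g: "good_tab (kk m n ?I 0) (rr m n ?I 0) (ht m ?I) (ht n 0) (tsel m n ?I 0)" by (rule good_tsel)
    have len: "length (tsel m n ?I 0 ! ?li) = ?w" using good_row[OF g li] by (simp add: ht_def)
    have "(\<Sum>j<?w. Aval m n c k i j) = (\<Sum>j<length (tsel m n ?I 0 ! ?li). cv (BT m n c k ?I 0) (BR m n c k ?I 0) (tsel m n ?I 0 ! ?li ! j))"
      using len by (auto simp: Aval_def blk0 intro!: sum.cong)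
    also have "\<dots> = sum_list (map (cv (BT m n c k ?I 0) (BR m n c k ?I 0)) (tsel m n ?I 0 ! ?li))"
      by (simp add: sum_list_sum_nth atLeast0LessThan)
    also have "\<dots> = 0" using blk[of 0] by simp
    finally show ?thesis .
  qed
  have partJ: "\<And>J. J < pp n \<Longrightarrow> (\<Sum>j'<8. Aval m n c k i (?w + 8*J + j')) = 0"
  proof -
    fix J assume J: "J < pp n"
    have g: "good_tab (kk m n ?I (J+1)) (rr m n ?I (J+1)) (ht m ?I) (ht n (J+1)) (tsel m n ?I (J+1))" by (rule good_tsel)
    have len: "length (tsel m n ?I (J+1) ! ?li) = 8" using good_row[OF g li] by (simp add: ht_def)
    have "(\<Sum>j'<8. Aval m n c k i (?w + 8*J + j')) = (\<Sum>j'<length (tsel m n ?I (J+1) ! ?li). cv (BT m n c k ?I (J+1)) (BR m n c k ?I (J+1)) (tsel m n ?I (J+1) ! ?li ! j'))"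
      using len by (auto simp: Aval_def blkJ intro!: sum.cong)
    also have "\<dots> = sum_list (map (cv (BT m n c k ?I (J+1)) (BR m n c k ?I (J+1))) (tsel m n ?I (J+1) ! ?li))"
      by (simp add: sum_list_sum_nth atLeast0LessThan)
    also have "\<dots> = 0" using blk[of "J+1"] J by simp
    finally show "(\<Sum>j'<8. Aval m n c k i (?w + 8*J + j')) = 0" .
  qed
  have "(\<Sum>j<n. Aval m n c k i j) = (\<Sum>j<?w. Aval m n c k i j) + (\<Sum>J<pp n. \<Sum>j'<8. Aval m n c k i (?w + 8*J + j'))"
    by (subst ndec, rule sum_split_blocks)
  also have "\<dots> = 0" using part0 partJ by simp
  finally show ?thesis .
qed

lemma lidx_bound_col: "lidx (hh n) j < ht n (bidx (hh n) j)"
  by (simp add: lidx_def bidx_def ht_def)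

lemma col_sum_zero:
  assumes mm: "m mod 4 = 1" "9 \<le> m"
  shows "(\<Sum>i<m. Aval m n c k i j) = 0"
proof -
  let ?h = "hh m" and ?w = "hh n" and ?J = "bidx (hh n) j" and ?lj = "lidx (hh n) j"
  have lj: "?lj < ht n ?J" by (rule lidx_bound_col)
  have mdec: "m = ?h + 8 * pp m" by (rule m_decomp[OF mm])
  have blk: "\<And>I. sum_list (map (cv (BT m n c k I ?J) (BR m n c k I ?J)) (map (\<lambda>row. row ! ?lj) (tsel m n I ?J))) = 0"
  proof -
    fix I
    have g: "good_tab (kk m n I ?J) (rr m n I ?J) (ht m I) (ht n ?J) (tsel m n I ?J)" by (rule good_tsel)
    show "sum_list (map (cv (BT m n c k I ?J) (BR m n c k I ?J)) (map (\<lambda>row. row ! ?lj) (tsel m n I ?J))) = 0"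
      by (rule line_sum_zero[OF conjunct1[OF good_col[OF g lj]]]) (rule BT_rel)
  qed
  have part0: "(\<Sum>i<?h. Aval m n c k i j) = 0"
  proof -
    have g: "good_tab (kk m n 0 ?J) (rr m n 0 ?J) (ht m 0) (ht n ?J) (tsel m n 0 ?J)" by (rule good_tsel)
    have len: "length (tsel m n 0 ?J) = ?h" using good_col[OF g lj] by (simp add: ht_def)
    have "(\<Sum>i<?h. Aval m n c k i j) = (\<Sum>i<length (map (\<lambda>row. row ! ?lj) (tsel m n 0 ?J)). cv (BT m n c k 0 ?J) (BR m n c k 0 ?J) ((map (\<lambda>row. row ! ?lj) (tsel m n 0 ?J)) ! i))"
      using len by (auto simp: Aval_def blk0 intro!: sum.cong)
    also have "\<dots> = sum_list (map (cv (BT m n c k 0 ?J) (BR m n c k 0 ?J)) (map (\<lambda>row. row ! ?lj) (tsel m n 0 ?J)))"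
      by (simp add: sum_list_sum_nth atLeast0LessThan)
    also have "\<dots> = 0" using blk[of 0] by simp
    finally show ?thesis .
  qed
  have partI: "\<And>I. (\<Sum>i'<8. Aval m n c k (?h + 8*I + i') j) = 0"
  proof -
    fix I
    have g: "good_tab (kk m n (I+1) ?J) (rr m n (I+1) ?J) (ht m (I+1)) (ht n ?J) (tsel m n (I+1) ?J)" by (rule good_tsel)
    have len: "length (tsel m n (I+1) ?J) = 8" using good_col[OF g lj] by (simp add: ht_def)
    have "(\<Sum>i'<8. Aval m n c k (?h + 8*I + i') j) = (\<Sum>i<length (map (\<lambda>row. row ! ?lj) (tsel m n (I+1) ?J)). cv (BT m n c k (I+1) ?J) (BR m n c k (I+1) ?J) ((map (\<lambda>row. row ! ?lj) (tsel m n (I+1) ?J)) ! i))"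
      using len by (auto simp: Aval_def blkJ intro!: sum.cong)
    also have "\<dots> = sum_list (map (cv (BT m n c k (I+1) ?J) (BR m n c k (I+1) ?J)) (map (\<lambda>row. row ! ?lj) (tsel m n (I+1) ?J)))"
      by (simp add: sum_list_sum_nth atLeast0LessThan)
    also have "\<dots> = 0" using blk[of "I+1"] by simp
    finally show "(\<Sum>i'<8. Aval m n c k (?h + 8*I + i') j) = 0" .
  qed
  have "(\<Sum>i<m. Aval m n c k i j) = (\<Sum>i<?h. Aval m n c k i j) + (\<Sum>I<pp m. \<Sum>i'<8. Aval m n c k (?h + 8*I + i') j)"
    by (subst mdec, rule sum_split_blocks)
  also have "\<dots> = 0" using part0 partI by simp
  finally show ?thesis .
qed

lemma pos_range:
  assumes "2 \<le> s" "g < 4*s" "r < 3"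
  shows "1 \<le> pos s g r \<and> pos s g r \<le> 12*s"
proof -
  have sk: "1 \<le> sa s (g+1) \<and> sa s (g+1) + (g+1) \<le> 8*s" using skolem_dec[OF assms(1), of "g+1"] assms by simp
  consider "r = 0" | "r = 1" | "r = 2" using assms(3) by linarith
  then show ?thesis
  proof cases
    case 1 then show ?thesis using assms by (simp add: pos_def)
  next
    case 2 then show ?thesis using sk by (simp add: pos_def)
  next
    case 3 then show ?thesis using sk by (simp add: pos_def)
  qed
qed

lemma pos_inj:
  assumes s: "2 \<le> s" and g: "g1 < 4*s" "g2 < 4*s" and r: "r1 < 3" "r2 < 3"
    and eq: "pos s g1 r1 = pos s g2 r2"
  shows "g1 = g2 \<and> r1 = r2"
proof -
  have sk1: "sdec s (sa s (g1+1)) = (g1+1, 0) \<and> sdec s (sa s (g1+1) + (g1+1)) = (g1+1, 1) \<and> 1 \<le> sa s (g1+1)"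
    using skolem_dec[OF s, of "g1+1"] g by simp
  have sk2: "sdec s (sa s (g2+1)) = (g2+1, 0) \<and> sdec s (sa s (g2+1) + (g2+1)) = (g2+1, 1) \<and> 1 \<le> sa s (g2+1)"
    using skolem_dec[OF s, of "g2+1"] g by simp
  consider "r1 = 0" | "r1 = 1" | "r1 = 2" using r by linarith
  then show ?thesis
  proof cases
    case 1
    consider "r2 = 0" | "r2 = 1" | "r2 = 2" using r by linarith
    then show ?thesis
    proof cases
      case 1 then show ?thesis using eq \<open>r1 = 0\<close> by (simp add: pos_def)
    next
      case 2 then show ?thesis using eq \<open>r1 = 0\<close> g sk2 by (simp add: pos_def)
    next
      case 3 then show ?thesis using eq \<open>r1 = 0\<close> g sk2 by (simp add: pos_def)
    qed
  next
    case 2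
    consider "r2 = 0" | "r2 = 1" | "r2 = 2" using r by linarith
    then show ?thesis
    proof cases
      case 1 then show ?thesis using eq \<open>r1 = 1\<close> g sk1 by (simp add: pos_def)
    next
      case 2
      then have "sa s (g1+1) = sa s (g2+1)" using eq \<open>r1 = 1\<close> by (simp add: pos_def)
      then show ?thesis using sk1 sk2 \<open>r1 = 1\<close> 2 by (metis Pair_inject add_right_cancel)
    next
      case 3
      then have "sa s (g1+1) = sa s (g2+1) + (g2+1)" using eq \<open>r1 = 1\<close> by (simp add: pos_def)
      then show ?thesis using sk1 sk2 by (metis Pair_inject zero_neq_one)
    qed
  next
    case 3
    consider "r2 = 0" | "r2 = 1" | "r2 = 2" using r by linarith
    then show ?thesis
    proof cases
      case 1 then show ?thesis using eq \<open>r1 = 2\<close> g sk1 by (simp add: pos_def)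
    next
      case 2
      then have "sa s (g1+1) + (g1+1) = sa s (g2+1)" using eq \<open>r1 = 2\<close> by (simp add: pos_def)
      then show ?thesis using sk1 sk2 by (metis Pair_inject zero_neq_one)
    next
      case 3
      then have "sa s (g1+1) + (g1+1) = sa s (g2+1) + (g2+1)" using eq \<open>r1 = 2\<close> by (simp add: pos_def)
      then show ?thesis using sk1 sk2 \<open>r1 = 2\<close> 3 by (metis Pair_inject add_right_cancel)
    qed
  qed
qed

definition cel :: "nat \<Rightarrow> nat \<Rightarrow> nat \<Rightarrow> nat \<Rightarrow> cell" where
  "cel m n i j = tsel m n (bidx (hh m) i) (bidx (hh n) j) ! lidx (hh m) i ! lidx (hh n) j"

lemma Aval_cel: "Aval m n c k i j = cv (BT m n c k (bidx (hh m) i) (bidx (hh n) j)) (BR m n c k (bidx (hh m) i) (bidx (hh n) j)) (cel m n i j)"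
  by (simp add: Aval_def cel_def)

definition wi :: "nat \<Rightarrow> nat \<Rightarrow> nat \<Rightarrow> nat \<Rightarrow> nat" where
  "wi m n i j = (if fst (cel m n i j) = 0 then 3 * toff m n (bidx (hh m) i) (bidx (hh n) j) + fst (snd (cel m n i j))
     else roff m n (bidx (hh m) i) (bidx (hh n) j) + fst (snd (cel m n i j)))"

definition mg :: "nat \<Rightarrow> nat \<Rightarrow> nat \<Rightarrow> nat \<Rightarrow> nat \<Rightarrow> nat \<Rightarrow> int" where
  "mg m n c k i j = (if fst (cel m n i j) = 0 then BT m n c k (bidx (hh m) i) (bidx (hh n) j) (fst (snd (cel m n i j)))
     else BR m n c k (bidx (hh m) i) (bidx (hh n) j) (fst (snd (cel m n i j)))) + snd (snd (snd (cel m n i j)))"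

lemma unblk: "x = (if bidx h x = 0 then lidx h x else h + 8 * (bidx h x - 1) + lidx h x)"
  by (simp add: bidx_def lidx_def)

definition decT :: "nat \<Rightarrow> nat \<Rightarrow> nat \<Rightarrow> nat \<times> nat" where
  "decT m n W = (if W < 3 * kC m n then (0,0) else if W < 3 * kC m n + 12 * pp n then (0, (W - 3 * kC m n) div 12 + 1)
     else ((W - 3 * kC m n - 12 * pp n) div 12 + 1, 0))"

definition decR :: "nat \<Rightarrow> nat \<Rightarrow> nat \<Rightarrow> nat \<times> nat" where
  "decR m n W = (if W < rC m n then (0,0)
    else if W < rC m n + rT m * pp n then (0, (W - rC m n) div rT m + 1)
    else if W < rC m n + rT m * pp n + rT n * pp m then ((W - rC m n - rT m * pp n) div rT n + 1, 0)
    else (((W - (rC m n + rT m * pp n + rT n * pp m)) div 16) div pp n + 1,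
          ((W - (rC m n + rT m * pp n + rT n * pp m)) div 16) mod pp n + 1))"

lemma div_part: "x < d \<Longrightarrow> (d * a + x) div d = a" for d :: nat
  by simp

lemma decT_ok:
  assumes "I \<le> pp m" "J \<le> pp n" "x < 3 * kk m n I J"
  shows "decT m n (3 * toff m n I J + x) = (I, J)"
proof (cases "I = 0")
  case True
  show ?thesis
  proof (cases "J = 0")
    case True then show ?thesis using \<open>I = 0\<close> assms by (simp add: decT_def toff_def kk_def)
  next
    case False
    have x: "x < 12" using assms \<open>I = 0\<close> False by (simp add: kk_def)
    have W: "3 * toff m n I J + x = 3 * kC m n + (12 * (J - 1) + x)" using \<open>I = 0\<close> False by (simp add: toff_def)
    have lt: "12 * (J - 1) + x < 12 * pp n" using x assms(2) False by linarith
    have d: "(12 * (J - 1) + x) div 12 = J - 1" using x by simp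
    show ?thesis unfolding W decT_def using lt d False \<open>I = 0\<close> by simp
  qed
next
  case False
  then have J: "J = 0" using assms(3) by (cases "J = 0") (simp_all add: kk_def)
  have x: "x < 12" using assms False J by (simp add: kk_def)
  have W: "3 * toff m n I J + x = 3 * kC m n + 12 * pp n + (12 * (I - 1) + x)" using False J by (simp add: toff_def)
  have d: "(12 * (I - 1) + x) div 12 = I - 1" using x by simp
  show ?thesis unfolding W decT_def using d False J by simp
qed

lemma decR_ok:
  assumes "I \<le> pp m" "J \<le> pp n" "x < rr m n I J"
  shows "decR m n (roff m n I J + x) = (I, J)"
proof (cases "I = 0")
  case True
  show ?thesis
  proof (cases "J = 0")
    case True then show ?thesis using \<open>I = 0\<close> assms by (simp add: decR_def roff_def rr_def)
  next
    case False
    have x: "x < rT m" using assms \<open>I = 0\<close> False by (simp add: rr_def)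
    have W: "roff m n I J + x = rC m n + (rT m * (J - 1) + x)" using \<open>I = 0\<close> False by (simp add: roff_def)
    have "rT m * (J - 1) + x < rT m * (J - 1) + rT m" using x by simp
    also have "\<dots> = rT m * J" using False by (metis Suc_pred' mult_Suc_right add.commute not_gr_zero)
    also have "\<dots> \<le> rT m * pp n" using assms(2) by (rule mult_le_mono2)
    finally have lt: "rT m * (J - 1) + x < rT m * pp n" .
    have d: "(rT m * (J - 1) + x) div rT m = J - 1" using x by simp
    show ?thesis unfolding W decR_def using lt d False \<open>I = 0\<close> by simp
  qed
next
  case I0: False
  show ?thesis
  proof (cases "J = 0")
    case True
    have x: "x < rT n" using assms I0 True by (simp add: rr_def)
    have W: "roff m n I J + x = rC m n + rT m * pp n + (rT n * (I - 1) + x)" using I0 True by (simp add: roff_def)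
    have "rT n * (I - 1) + x < rT n * (I - 1) + rT n" using x by simp
    also have "\<dots> = rT n * I" using I0 by (metis Suc_pred' mult_Suc_right add.commute not_gr_zero)
    also have "\<dots> \<le> rT n * pp m" using assms(1) by (rule mult_le_mono2)
    finally have lt: "rT n * (I - 1) + x < rT n * pp m" .
    have d: "(rT n * (I - 1) + x) div rT n = I - 1" using x by simp
    show ?thesis unfolding W decR_def using lt d I0 True by simp
  next
    case False
    let ?B = "rC m n + rT m * pp n + rT n * pp m"
    have x: "x < 16" using assms I0 False by (simp add: rr_def)
    have W: "roff m n I J + x = ?B + (16 * ((I - 1) * pp n + (J - 1)) + x)" using I0 False by (simp add: roff_def)
    have d: "(16 * ((I - 1) * pp n + (J - 1)) + x) div 16 = (I - 1) * pp n + (J - 1)" using x by simp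
    have jq: "J - 1 < pp n" using assms(2) False by linarith
    have d2: "((I - 1) * pp n + (J - 1)) div pp n = I - 1" "((I - 1) * pp n + (J - 1)) mod pp n = J - 1"
      using jq by simp_all
    show ?thesis unfolding W decR_def using d d2 I0 False by simp
  qed
qed

context
  fixes m n c :: nat
  assumes c0: "c > 0" and c4: "c mod 4 = 0" and m1: "m mod 4 = 1" and m9: "9 \<le> m"
    and n1: "n mod 4 = 1" and n9: "9 \<le> n"
begin

lemma mdec: "m = hh m + 8 * pp m" by (rule m_decomp[OF m1 m9])
lemma ndec: "n = hh n + 8 * pp n" by (rule m_decomp[OF n1 n9])

lemma T0_ge: "3 \<le> T0 m n" by (simp add: T0_def kC_def)

lemma S_prop: "4 * (c * T0 m n div 4) = c * T0 m n \<and> 2 \<le> c * T0 m n div 4"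
proof -
  obtain c' where c': "c = 4 * c'" using c4 by auto
  have "1 \<le> c'" using c0 c' by simp
  then have "3 \<le> c' * T0 m n" using T0_ge by (metis mult_le_mono nat_mult_1)
  then show ?thesis using c' by simp
qed

lemma cells_count: "m * n = 15 * T0 m n + 4 * R0 m n"
proof -
  have dm: "m = hh m + 8 * pp m" by (rule mdec)
  have dn: "n = hh n + 8 * pp n" by (rule ndec)
  obtain p q where pq: "pp m = p" "pp n = q" by simp
  have "m * n = (hh m + 8 * p) * (hh n + 8 * q)" using dm dn pq by simp
  moreover have "15 * T0 m n + 4 * R0 m n = 15 * (kC m n + 4*(p+q)) + 4 * (rC m n + rT m * q + rT n * p + 16 * p * q)"
    using pq by (simp add: T0_def R0_def)
  moreover have "(hh m + 8 * p) * (hh n + 8 * q) = 15 * (kC m n + 4*(p+q)) + 4 * (rC m n + rT m * q + rT n * p + 16 * p * q)"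
  proof -
    consider "hh m = 9" "hh n = 9" | "hh m = 9" "hh n = 13" | "hh m = 13" "hh n = 9" | "hh m = 13" "hh n = 13"
      using hh_cases[of m] hh_cases[of n] by blast
    then show ?thesis
      by cases (simp_all add: kC_def rC_def rT_def algebra_simps)
  qed
  ultimately show ?thesis by simp
qed

lemma bidx_le: "i < m \<Longrightarrow> bidx (hh m) i \<le> pp m"
proof -
  assume i: "i < m"
  show ?thesis
  proof (cases "i < hh m")
    case True then show ?thesis by (simp add: bidx_def)
  next
    case False
    then have "i - hh m < 8 * pp m" using i mdec by linarith
    then have "(i - hh m) div 8 < pp m" by (simp add: div_less_iff_less_mult mult.commute)
    then show ?thesis using False by (simp add: bidx_def)
  qed
qed

lemma bidx_le_n: "j < n \<Longrightarrow> bidx (hh n) j \<le> pp n"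
proof -
  assume j: "j < n"
  show ?thesis
  proof (cases "j < hh n")
    case True then show ?thesis by (simp add: bidx_def)
  next
    case False
    then have "j - hh n < 8 * pp n" using j ndec by linarith
    then have "(j - hh n) div 8 < pp n" by (simp add: div_less_iff_less_mult mult.commute)
    then show ?thesis using False by (simp add: bidx_def)
  qed
qed


lemma cel_ok:
  assumes "i < m" "j < n"
  shows "cell_ok (kk m n (bidx (hh m) i) (bidx (hh n) j)) (rr m n (bidx (hh m) i) (bidx (hh n) j)) (cel m n i j)"
  unfolding cel_def
  by (rule good_cell[OF good_tsel lidx_bound lidx_bound_col])

lemma toff_bound: "I \<le> pp m \<Longrightarrow> J \<le> pp n \<Longrightarrow> toff m n I J + kk m n I J \<le> T0 m n"
  by (auto simp: toff_def kk_def T0_def)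

lemma roff_bound: "I \<le> pp m \<Longrightarrow> J \<le> pp n \<Longrightarrow> roff m n I J + rr m n I J \<le> R0 m n"
proof -
  assume I: "I \<le> pp m" and J: "J \<le> pp n"
  show ?thesis
  proof (cases "I = 0")
    case True
    show ?thesis
    proof (cases "J = 0")
      case True then show ?thesis using \<open>I = 0\<close> by (simp add: roff_def rr_def R0_def)
    next
      case False
      have "rT m * (J - 1) + rT m \<le> rT m * pp n"
        using J False by (metis Suc_pred' mult_Suc_right add.commute mult_le_mono2 not_gr_zero)
      then show ?thesis using \<open>I = 0\<close> False by (simp add: roff_def rr_def R0_def)
    qed
  next
    case False
    show ?thesis
    proof (cases "J = 0")
      case True
      have "rT n * (I - 1) + rT n \<le> rT n * pp m"
        using I False by (metis Suc_pred' mult_Suc_right add.commute mult_le_mono2 not_gr_zero)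
      then show ?thesis using False True unfolding roff_def rr_def R0_def by simp
    next
      case J0: False
      have "(I - 1) * pp n + (J - 1) + 1 \<le> (I - 1) * pp n + pp n" using J J0 by simp
      also have "\<dots> = I * pp n" using False by (metis Suc_pred' mult_Suc not_gr_zero add.commute)
      also have "\<dots> \<le> pp m * pp n" using I by (rule mult_le_mono1)
      finally have "16 * ((I - 1) * pp n + (J - 1) + 1) \<le> 16 * (pp m * pp n)" by (rule mult_le_mono2)
      then have "16 * ((I - 1) * pp n + (J - 1)) + 16 \<le> 16 * (pp m * pp n)" by simp
      then show ?thesis using False J0 by (simp add: roff_def rr_def R0_def algebra_simps)
    qed
  qed
qed


lemma local_inj:
  assumes i: "i1 < m" "i2 < m" and j: "j1 < n" "j2 < n"
    and t: "fst (cel m n i1 j1) = fst (cel m n i2 j2)"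
    and w: "wi m n i1 j1 = wi m n i2 j2"
    and v: "snd (snd (snd (cel m n i1 j1))) = snd (snd (snd (cel m n i2 j2)))"
  shows "i1 = i2 \<and> j1 = j2"
proof -
  define I1 where "I1 = bidx (hh m) i1"
  define I2 where "I2 = bidx (hh m) i2"
  define J1 where "J1 = bidx (hh n) j1"
  define J2 where "J2 = bidx (hh n) j2"
  obtain t1 x1 s1 v1 where c1: "cel m n i1 j1 = (t1,x1,s1,v1)" by (cases "cel m n i1 j1") auto
  obtain t2 x2 s2 v2 where c2: "cel m n i2 j2 = (t2,x2,s2,v2)" by (cases "cel m n i2 j2") auto
  have ok1: "cell_ok (kk m n I1 J1) (rr m n I1 J1) (t1,x1,s1,v1)"
    using cel_ok[OF i(1) j(1)] c1 by (simp add: I1_def J1_def)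
  have ok2: "cell_ok (kk m n I2 J2) (rr m n I2 J2) (t2,x2,s2,v2)"
    using cel_ok[OF i(2) j(2)] c2 by (simp add: I2_def J2_def)
  have bI: "I1 \<le> pp m" "I2 \<le> pp m" using bidx_le i by (simp_all add: I1_def I2_def)
  have bJ: "J1 \<le> pp n" "J2 \<le> pp n" using bidx_le_n j by (simp_all add: J1_def J2_def)
  have tt: "t1 = t2" using t c1 c2 by simp
  have vv: "v1 = v2" using v c1 c2 by simp
  have blk: "I1 = I2 \<and> J1 = J2 \<and> x1 = x2"
  proof (cases "t1 = 0")
    case True
    have x1: "x1 < 3 * kk m n I1 J1" and x2: "x2 < 3 * kk m n I2 J2" using ok1 ok2 True tt by (auto simp: cell_ok_def)
    have W: "3 * toff m n I1 J1 + x1 = 3 * toff m n I2 J2 + x2"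
      using w True tt c1 c2 by (simp add: wi_def I1_def I2_def J1_def J2_def)
    have "decT m n (3 * toff m n I1 J1 + x1) = (I1, J1)" by (rule decT_ok[OF bI(1) bJ(1) x1])
    moreover have "decT m n (3 * toff m n I2 J2 + x2) = (I2, J2)" by (rule decT_ok[OF bI(2) bJ(2) x2])
    ultimately have "I1 = I2 \<and> J1 = J2" using W by simp
    then show ?thesis using W by simp
  next
    case False
    have x1: "x1 < rr m n I1 J1" and x2: "x2 < rr m n I2 J2" using ok1 ok2 False tt by (auto simp: cell_ok_def)
    have W: "roff m n I1 J1 + x1 = roff m n I2 J2 + x2"
      using w False tt c1 c2 by (simp add: wi_def I1_def I2_def J1_def J2_def)
    have "decR m n (roff m n I1 J1 + x1) = (I1, J1)" by (rule decR_ok[OF bI(1) bJ(1) x1])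
    moreover have "decR m n (roff m n I2 J2 + x2) = (I2, J2)" by (rule decR_ok[OF bI(2) bJ(2) x2])
    ultimately have "I1 = I2 \<and> J1 = J2" using W by simp
    then show ?thesis using W by simp
  qed
  have g: "good_tab (kk m n I1 J1) (rr m n I1 J1) (ht m I1) (ht n J1) (tsel m n I1 J1)" by (rule good_tsel)
  have li: "lidx (hh m) i1 < ht m I1" "lidx (hh m) i2 < ht m I1"
    using lidx_bound[of m i1] lidx_bound[of m i2] blk by (simp_all add: I1_def I2_def)
  have lj: "lidx (hh n) j1 < ht n J1" "lidx (hh n) j2 < ht n J1"
    using lidx_bound_col[of n j1] lidx_bound_col[of n j2] blk by (simp_all add: J1_def J2_def)
  have key: "key (tsel m n I1 J1 ! lidx (hh m) i1 ! lidx (hh n) j1) = key (tsel m n I1 J1 ! lidx (hh m) i2 ! lidx (hh n) j2)"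
    using c1 c2 blk tt vv by (simp add: cel_def key_def I1_def I2_def J1_def J2_def)
  have "lidx (hh m) i1 = lidx (hh m) i2 \<and> lidx (hh n) j1 = lidx (hh n) j2"
    by (rule good_inj[OF g li(1) lj(1) li(2) lj(2) key])
  then show ?thesis using blk unblk[of i1 "hh m"] unblk[of i2 "hh m"] unblk[of j1 "hh n"] unblk[of j2 "hh n"]
    by (metis I1_def I2_def J1_def J2_def)
qed


lemma pos_ge1: "1 \<le> c * T0 m n div 4 \<Longrightarrow> 1 \<le> pos (c * T0 m n div 4) g r"
  by (simp add: pos_def)

lemma abs_Aval:
  assumes "i < m" "j < n"
  shows "\<bar>Aval m n c k i j\<bar> = mg m n c k i j \<and> 1 \<le> mg m n c k i j"
proof -
  obtain t x sg v where cc: "cel m n i j = (t,x,sg,v)" by (cases "cel m n i j") auto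
  have ok: "cell_ok (kk m n (bidx (hh m) i) (bidx (hh n) j)) (rr m n (bidx (hh m) i) (bidx (hh n) j)) (t,x,sg,v)"
    using cel_ok[OF assms] cc by simp
  have S1: "1 \<le> c * T0 m n div 4" using S_prop by simp
  have B: "0 \<le> (if t = 0 then BT m n c k (bidx (hh m) i) (bidx (hh n) j) x else BR m n c k (bidx (hh m) i) (bidx (hh n) j) x)"
    using pos_ge1[OF S1] by (simp add: BT_def BR_def)
  have v: "1 \<le> v" and sg: "sg = 1 \<or> sg = -1" using ok by (auto simp: cell_ok_def)
  have mgv: "mg m n c k i j = (if t = 0 then BT m n c k (bidx (hh m) i) (bidx (hh n) j) x else BR m n c k (bidx (hh m) i) (bidx (hh n) j) x) + v"
    using cc by (simp add: mg_def)
  have av: "Aval m n c k i j = sg * ((if t = 0 then BT m n c k (bidx (hh m) i) (bidx (hh n) j) x else BR m n c k (bidx (hh m) i) (bidx (hh n) j) x) + v)"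
    using cc by (simp add: Aval_cel cv_def)
  show ?thesis using B v sg mgv av by (auto simp: abs_mult)
qed

lemma mg_cases:
  assumes k: "k < c" and ij: "i < m" "j < n"
  shows "(fst (cel m n i j) = 0 \<longrightarrow>
           (\<exists>a r P. a < T0 m n \<and> r < 3 \<and> wi m n i j = 3 * a + r \<and> P = pos (c * T0 m n div 4) (k * T0 m n + a) r
              \<and> k * T0 m n + a < 4 * (c * T0 m n div 4)
              \<and> mg m n c k i j = 5 * (int P - 1) + snd (snd (snd (cel m n i j)))
              \<and> 1 \<le> snd (snd (snd (cel m n i j))) \<and> snd (snd (snd (cel m n i j))) \<le> 5))
       \<and> (fst (cel m n i j) \<noteq> 0 \<longrightarrow>
           (wi m n i j < R0 m n \<and> mg m n c k i j = 15 * int (c * T0 m n) + 4 * int (k * R0 m n + wi m n i j) + snd (snd (snd (cel m n i j)))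
              \<and> 1 \<le> snd (snd (snd (cel m n i j))) \<and> snd (snd (snd (cel m n i j))) \<le> 4))"
proof -
  define I where "I = bidx (hh m) i"
  define J where "J = bidx (hh n) j"
  obtain t x sg v where cc: "cel m n i j = (t,x,sg,v)" by (cases "cel m n i j") auto
  have ok: "cell_ok (kk m n I J) (rr m n I J) (t,x,sg,v)"
    using cel_ok[OF ij] cc by (simp add: I_def J_def)
  have bI: "I \<le> pp m" "J \<le> pp n" using bidx_le[OF ij(1)] bidx_le_n[OF ij(2)] by (simp_all add: I_def J_def)
  have S: "4 * (c * T0 m n div 4) = c * T0 m n" using S_prop by simp
  show ?thesis
  proof (intro conjI impI)
    assume t0: "fst (cel m n i j) = 0"
    then have tt: "t = 0" using cc by simp
    have x: "x < 3 * kk m n I J" and v: "1 \<le> v" "v \<le> 5" using ok tt by (auto simp: cell_ok_def)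
    have tb: "toff m n I J + kk m n I J \<le> T0 m n" by (rule toff_bound[OF bI])
    define a where "a = toff m n I J + x div 3"
    define r where "r = x mod 3"
    have "x div 3 < kk m n I J" using x by (simp add: div_less_iff_less_mult mult.commute)
    then have a: "a < T0 m n" using tb by (simp add: a_def)
    have r: "r < 3" by (simp add: r_def)
    have w: "wi m n i j = 3 * a + r" using cc tt by (simp add: wi_def a_def r_def I_def J_def)
    have g: "k * T0 m n + a < 4 * (c * T0 m n div 4)"
    proof -
      have "k * T0 m n + a < k * T0 m n + T0 m n" using a by simp
      also have "\<dots> = Suc k * T0 m n" by simp
      also have "\<dots> \<le> c * T0 m n" using k by (intro mult_le_mono1) simp
      finally show ?thesis using S by simp
    qed
    have mgv: "mg m n c k i j = 5 * (int (pos (c * T0 m n div 4) (k * T0 m n + a) r) - 1) + v"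
      using cc tt by (simp add: mg_def BT_def a_def r_def I_def J_def add.assoc)
    show "\<exists>a r P. a < T0 m n \<and> r < 3 \<and> wi m n i j = 3 * a + r \<and> P = pos (c * T0 m n div 4) (k * T0 m n + a) r
              \<and> k * T0 m n + a < 4 * (c * T0 m n div 4)
              \<and> mg m n c k i j = 5 * (int P - 1) + snd (snd (snd (cel m n i j)))
              \<and> 1 \<le> snd (snd (snd (cel m n i j))) \<and> snd (snd (snd (cel m n i j))) \<le> 5"
      using a r w g mgv v cc by auto
  next
    assume t0: "fst (cel m n i j) \<noteq> 0"
    then have tt: "t \<noteq> 0" using cc by simp
    have x: "x < rr m n I J" and v: "1 \<le> v" "v \<le> 4" using ok tt by (auto simp: cell_ok_def)
    have rb: "roff m n I J + rr m n I J \<le> R0 m n" by (rule roff_bound[OF bI])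
    have w: "wi m n i j = roff m n I J + x" using cc tt by (simp add: wi_def I_def J_def)
    show "wi m n i j < R0 m n" using w x rb by simp
    show "mg m n c k i j = 15 * int (c * T0 m n) + 4 * int (k * R0 m n + wi m n i j) + snd (snd (snd (cel m n i j)))"
      using cc tt w by (simp add: mg_def BR_def I_def J_def add.assoc)
    show "1 \<le> snd (snd (snd (cel m n i j)))" "snd (snd (snd (cel m n i j))) \<le> 4" using v cc by simp_all
  qed
qed


lemma tag01:
  assumes "i < m" "j < n"
  shows "fst (cel m n i j) = 0 \<or> fst (cel m n i j) = 1"
proof -
  obtain t x sg v where cc: "cel m n i j = (t,x,sg,v)" by (cases "cel m n i j") auto
  show ?thesis using cel_ok[OF assms] cc by (auto simp: cell_ok_def)
qed

lemma mg_inj: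
  assumes k: "k1 < c" "k2 < c" and i: "i1 < m" "i2 < m" and j: "j1 < n" "j2 < n"
    and eq: "mg m n c k1 i1 j1 = mg m n c k2 i2 j2"
  shows "k1 = k2 \<and> i1 = i2 \<and> j1 = j2"
proof -
  define S where "S = c * T0 m n div 4"
  have S4: "4 * S = c * T0 m n" and S2: "2 \<le> S" using S_prop by (simp_all add: S_def)
  have T0p: "0 < T0 m n" using T0_ge by simp
  note c1 = conjunct1[OF mg_cases[OF k(1) i(1) j(1)]]
  note c1r = conjunct2[OF mg_cases[OF k(1) i(1) j(1)]]
  note c2 = conjunct1[OF mg_cases[OF k(2) i(2) j(2)]]
  note c2r = conjunct2[OF mg_cases[OF k(2) i(2) j(2)]]
  let ?v1 = "snd (snd (snd (cel m n i1 j1)))" and ?v2 = "snd (snd (snd (cel m n i2 j2)))"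
  have S4i: "15 * int (c * T0 m n) = 60 * int S"
  proof -
    have "c * T0 m n = 4 * S" using S4 by simp
    then show ?thesis by simp
  qed
  have tripbound: "\<And>P v. P \<le> 12 * S \<Longrightarrow> v \<le> 5 \<Longrightarrow> 5 * (int P - 1) + v \<le> 15 * int (c * T0 m n)"
  proof -
    fix P v assume "P \<le> 12 * S" "v \<le> (5::int)"
    then have "int P \<le> 12 * int S" by linarith
    then have "5 * (int P - 1) + v \<le> 60 * int S" using \<open>v \<le> 5\<close> by arith
    then show "5 * (int P - 1) + v \<le> 15 * int (c * T0 m n)" by (simp only: S4i)
  qed
  show ?thesis
  proof (cases "fst (cel m n i1 j1) = 0")
    case t1: True
    obtain a1 r1 P1 where A1: "a1 < T0 m n" "r1 < 3" "wi m n i1 j1 = 3 * a1 + r1" "P1 = pos S (k1 * T0 m n + a1) r1"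
      "k1 * T0 m n + a1 < 4 * S" "mg m n c k1 i1 j1 = 5 * (int P1 - 1) + ?v1" "1 \<le> ?v1" "?v1 \<le> 5"
      using c1 t1 by (auto simp: S_def)
    have P1r: "1 \<le> P1 \<and> P1 \<le> 12 * S" using pos_range[OF S2 A1(5) A1(2)] A1(4) by simp
    show ?thesis
    proof (cases "fst (cel m n i2 j2) = 0")
      case t2: True
      obtain a2 r2 P2 where A2: "a2 < T0 m n" "r2 < 3" "wi m n i2 j2 = 3 * a2 + r2" "P2 = pos S (k2 * T0 m n + a2) r2"
        "k2 * T0 m n + a2 < 4 * S" "mg m n c k2 i2 j2 = 5 * (int P2 - 1) + ?v2" "1 \<le> ?v2" "?v2 \<le> 5"
        using c2 t2 by (auto simp: S_def)
      have P2r: "1 \<le> P2 \<and> P2 \<le> 12 * S" using pos_range[OF S2 A2(5) A2(2)] A2(4) by simp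
      have PP: "P1 = P2 \<and> ?v1 = ?v2"
      proof -
        have e: "5 * (int P1 - 1) + ?v1 = 5 * (int P2 - 1) + ?v2" using eq A1(6) A2(6) by simp
        have "5 * (int P1 - int P2) = ?v2 - ?v1" using e by (simp add: algebra_simps)
        then have "int P1 = int P2" using A1(7,8) A2(7,8) by presburger
        then show ?thesis using e by simp
      qed
      have gr: "k1 * T0 m n + a1 = k2 * T0 m n + a2 \<and> r1 = r2"
        using pos_inj[OF S2 A1(5) A2(5) A1(2) A2(2)] PP A1(4) A2(4) by simp
      have kk: "k1 = k2 \<and> a1 = a2"
      proof -
        have "(k1 * T0 m n + a1) div T0 m n = (k2 * T0 m n + a2) div T0 m n"
             "(k1 * T0 m n + a1) mod T0 m n = (k2 * T0 m n + a2) mod T0 m n" using gr by simp_all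
        then show ?thesis using A1(1) A2(1) T0p by simp
      qed
      have "wi m n i1 j1 = wi m n i2 j2" using A1(3) A2(3) kk gr by simp
      then have "i1 = i2 \<and> j1 = j2" using local_inj[OF i j] t1 t2 PP by simp
      then show ?thesis using kk by simp
    next
      case t2: False
      have R2: "wi m n i2 j2 < R0 m n" "mg m n c k2 i2 j2 = 15 * int (c * T0 m n) + 4 * int (k2 * R0 m n + wi m n i2 j2) + ?v2" "1 \<le> ?v2"
        using c2r t2 by auto
      have "mg m n c k1 i1 j1 \<le> 15 * int (c * T0 m n)" using A1(6) A1(8) P1r tripbound by simp
      then show ?thesis using eq R2 by linarith
    qed
  next
    case t1: False
    have R1: "wi m n i1 j1 < R0 m n" "mg m n c k1 i1 j1 = 15 * int (c * T0 m n) + 4 * int (k1 * R0 m n + wi m n i1 j1) + ?v1" "1 \<le> ?v1" "?v1 \<le> 4"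
      using c1r t1 by auto
    show ?thesis
    proof (cases "fst (cel m n i2 j2) = 0")
      case t2: True
      obtain a2 r2 P2 where A2: "a2 < T0 m n" "r2 < 3" "wi m n i2 j2 = 3 * a2 + r2" "P2 = pos S (k2 * T0 m n + a2) r2"
        "k2 * T0 m n + a2 < 4 * S" "mg m n c k2 i2 j2 = 5 * (int P2 - 1) + ?v2" "1 \<le> ?v2" "?v2 \<le> 5"
        using c2 t2 by (auto simp: S_def)
      have P2r: "1 \<le> P2 \<and> P2 \<le> 12 * S" using pos_range[OF S2 A2(5) A2(2)] A2(4) by simp
      have "mg m n c k2 i2 j2 \<le> 15 * int (c * T0 m n)" using A2(6) A2(8) P2r tripbound by simp
      then show ?thesis using eq R1 by linarith
    next
      case t2: False
      have R2: "wi m n i2 j2 < R0 m n" "mg m n c k2 i2 j2 = 15 * int (c * T0 m n) + 4 * int (k2 * R0 m n + wi m n i2 j2) + ?v2" "1 \<le> ?v2" "?v2 \<le> 4"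
        using c2r t2 by auto
      have e: "4 * int (k1 * R0 m n + wi m n i1 j1) + ?v1 = 4 * int (k2 * R0 m n + wi m n i2 j2) + ?v2"
        using eq R1(2) R2(2) by simp
      have e2: "int (k1 * R0 m n + wi m n i1 j1) = int (k2 * R0 m n + wi m n i2 j2)" using e R1(3,4) R2(3,4) by presburger
      then have e3: "k1 * R0 m n + wi m n i1 j1 = k2 * R0 m n + wi m n i2 j2" using of_nat_eq_iff by blast
      have vv: "?v1 = ?v2" using e e2 by simp
      have R0p: "0 < R0 m n" using R1(1) by simp
      have kk: "k1 = k2 \<and> wi m n i1 j1 = wi m n i2 j2"
      proof -
        have "(k1 * R0 m n + wi m n i1 j1) div R0 m n = (k2 * R0 m n + wi m n i2 j2) div R0 m n"
             "(k1 * R0 m n + wi m n i1 j1) mod R0 m n = (k2 * R0 m n + wi m n i2 j2) mod R0 m n" using e3 by simp_all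
        then show ?thesis using R1(1) R2(1) R0p by simp
      qed
      have "fst (cel m n i1 j1) = fst (cel m n i2 j2)" using t1 t2 tag01[OF i(1) j(1)] tag01[OF i(2) j(2)] by simp
      then have "i1 = i2 \<and> j1 = j2" using local_inj[OF i j] kk vv by simp
      then show ?thesis using kk by simp
    qed
  qed
qed

lemma mg_range:
  assumes k: "k < c" and ij: "i < m" "j < n"
  shows "1 \<le> mg m n c k i j \<and> mg m n c k i j \<le> int (m * n * c)"
proof -
  define S where "S = c * T0 m n div 4"
  have S4: "4 * S = c * T0 m n" and S2: "2 \<le> S" using S_prop by (simp_all add: S_def)
  have N: "int (m * n * c) = 15 * int (c * T0 m n) + 4 * int (c * R0 m n)"
  proof -
    have "m * n * c = 15 * (c * T0 m n) + 4 * (c * R0 m n)" using cells_count by (simp add: algebra_simps)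
    then show ?thesis by (metis of_nat_add of_nat_mult of_nat_numeral)
  qed
  have one: "1 \<le> mg m n c k i j" using abs_Aval[OF ij] by simp
  have up: "mg m n c k i j \<le> 15 * int (c * T0 m n) + 4 * int (c * R0 m n)"
  proof (cases "fst (cel m n i j) = 0")
    case True
    obtain a r P where A: "a < T0 m n" "r < 3" "P = pos S (k * T0 m n + a) r"
      "k * T0 m n + a < 4 * S" "mg m n c k i j = 5 * (int P - 1) + snd (snd (snd (cel m n i j)))"
      "snd (snd (snd (cel m n i j))) \<le> 5"
      using conjunct1[OF mg_cases[OF k ij]] True by (auto simp: S_def)
    have "P \<le> 12 * S" using pos_range[OF S2 A(4) A(2)] A(3) by simp
    then have "int P \<le> 12 * int S" by linarith
    then have "mg m n c k i j \<le> 60 * int S" using A(5,6) by arith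
    moreover have "60 * int S = 15 * int (c * T0 m n)"
    proof -
      have "c * T0 m n = 4 * S" using S4 by simp
      then show ?thesis by simp
    qed
    moreover have "0 \<le> int (c * R0 m n)" by simp
    ultimately show ?thesis by linarith
  next
    case False
    have R: "wi m n i j < R0 m n" "mg m n c k i j = 15 * int (c * T0 m n) + 4 * int (k * R0 m n + wi m n i j) + snd (snd (snd (cel m n i j)))"
       "snd (snd (snd (cel m n i j))) \<le> 4"
      using conjunct2[OF mg_cases[OF k ij]] False by auto
    have "k * R0 m n + wi m n i j + 1 \<le> c * R0 m n"
    proof -
      have "k * R0 m n + wi m n i j + 1 \<le> k * R0 m n + R0 m n" using R(1) by simp
      also have "\<dots> = Suc k * R0 m n" by simp
      also have "\<dots> \<le> c * R0 m n" using k by (intro mult_le_mono1) simp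
      finally show ?thesis .
    qed
    then have "int (k * R0 m n + wi m n i j) + 1 \<le> int (c * R0 m n)" by linarith
    then show ?thesis using R(2,3) by arith
  qed
  show ?thesis using one up N by simp
qed

end

theorem proposition3p2:
  fixes m n c :: nat
  assumes "c > 0" and "c mod 4 = 0"
    and "m mod 4 = 1" and "n mod 4 = 1"
    and "m \<ge> 9" and "n \<ge> 9"
  shows "\<exists>A. IHS m n c A"
proof -
  note hyps = assms(1,2,3,5,4,6)
  let ?A = "Aval m n c"
  let ?D = "{..<c} \<times> {..<m} \<times> {..<n}"
  let ?f = "\<lambda>(k, i, j). \<bar>?A k i j\<bar>"
  have absA: "\<And>k i j. k < c \<Longrightarrow> i < m \<Longrightarrow> j < n \<Longrightarrow> \<bar>?A k i j\<bar> = mg m n c k i j"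
    using abs_Aval[OF hyps] by blast
  have inj: "inj_on ?f ?D"
  proof (rule inj_onI)
    fix x y assume x: "x \<in> ?D" and y: "y \<in> ?D" and e: "?f x = ?f y"
    obtain k1 i1 j1 where x': "x = (k1, i1, j1)" by (cases x) auto
    obtain k2 i2 j2 where y': "y = (k2, i2, j2)" by (cases y) auto
    have b: "k1 < c" "i1 < m" "j1 < n" "k2 < c" "i2 < m" "j2 < n" using x y x' y' by auto
    have "mg m n c k1 i1 j1 = mg m n c k2 i2 j2" using e x' y' absA b by simp
    then have "k1 = k2 \<and> i1 = i2 \<and> j1 = j2" using mg_inj[OF hyps b(1) b(4) b(2) b(5) b(3) b(6)] by simp
    then show "x = y" using x' y' by simp
  qed
  have sub: "?f ` ?D \<subseteq> {1..int (m * n * c)}"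
  proof
    fix z assume "z \<in> ?f ` ?D"
    then obtain k i j where b: "k < c" "i < m" "j < n" and z: "z = \<bar>?A k i j\<bar>" by auto
    show "z \<in> {1..int (m * n * c)}" using mg_range[OF hyps b] absA[OF b] z by simp
  qed
  have card: "card (?f ` ?D) = card {1..int (m * n * c)}"
  proof -
    have "card (?f ` ?D) = card ?D" by (rule card_image[OF inj])
    also have "\<dots> = m * n * c" by (simp add: card_cartesian_product)
    also have "\<dots> = card {1..int (m * n * c)}" by (simp flip: of_nat_mult)
    finally show ?thesis .
  qed
  have img: "?f ` ?D = {1..int (m * n * c)}"
    by (rule card_subset_eq[OF _ sub card]) simp
  have bij: "bij_betw ?f ?D {1..int (m * n * c)}"
    unfolding bij_betw_def using inj img by simp
  have rows: "\<forall>k<c. \<forall>i<m. (\<Sum>j<n. ?A k i j) = 0"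
    using row_sum_zero[OF assms(4) assms(6)] by blast
  have cols: "\<forall>k<c. \<forall>j<n. (\<Sum>i<m. ?A k i j) = 0"
    using col_sum_zero[OF assms(3) assms(5)] by blast
  have "IHS m n c ?A" unfolding IHS_def using bij rows cols by simp
  then show ?thesis by blast
qed

end
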